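(* Suppose $\iota$ is an involution of odd type with patching element $\gamma$. Let $d,\delta\in\Lambda$ be roots ($d^2=\delta^2=-2$) with $\delta_{\mathbb K_\gamma}^2<0$, where $\delta_{\mathbb K_\gamma}$ is the $\mathbb K_\gamma^\vee$-component of $\delta$ in $\Lambda\subset\mathbb K_\gamma^\vee\oplus\mathbb E_\gamma^\vee$. Then $H_d\cap\Omega^+_{\mathbb K_\gamma}=H_\delta\cap\Omega^+_{\mathbb K_\gamma}$ if and only if $d\in\{\pm\delta,\pm I_\mu(\delta)\}$.
   Context: $\Lambda=\mathbb U(2)\oplus\mathbb U\oplus\mathbb E_8(2)\subset\mathbb L_{K3}=\mathbb U^{\oplus3}\oplus\mathbb E_8^{\oplus2}$ (fixed primitive embedding); $\Omega_\Lambda^+$ a fixed component of the period domain $\{[\omega]\in\mathbf P(\Lambda\otimes\mathbb C):\omega^2=0,\langle\omega,\bar\omega\rangle>0\}$; $H_d=\{\omega\in\Omega^+_\Lambda:\langle\omega,d\rangle=0\}$. Setting: $\iota$ a fixed-point-free involution of $K_{\tau,\tau'}=\mathrm{Km}(E_\tau\times E_{\tau'})$ with $\mathbf K\subset H^2(K_{\tau,\tau'},\mathbb Z)_-$ ($\mathbf K\cong\mathbb U(2)\oplus\mathbb U(2)$ the image of $H^1(E_\tau,\mathbb Z)\otimes H^1(E_{\tau'},\mathbb Z)$), $\alpha:H^2(K_{\tau,\tau'},\mathbb Z)\to\mathbb L_{K3}$ a marking with $\alpha(H^2_-)=\Lambda$, $\alpha(H^2_+)=\Lambda^\perp$ and period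 in $\Omega^+_\Lambda$; $\mathbb K_\gamma=\alpha(\mathbf K)$, $\mathbb E_\gamma$ its orthogonal complement in $\Lambda$ ($\cong\mathbb E_8(2)$), $\Omega^+_{\mathbb K_\gamma}=\{[\omega]\in\Omega^+_\Lambda:\omega\in\mathbb K_\gamma\otimes\mathbb C\}$. Patching element: $\Lambda=\mathbb Z(d_1+d_2)+\mathbb K_\gamma\oplus\mathbb E_\gamma$ with $d_1\in\mathbb K_\gamma^\vee\setminus\mathbb K_\gamma$, $d_2\in\mathbb E_\gamma^\vee\setminus\mathbb E_\gamma$, $\gamma=\bar d_1$; odd type means $q_{\mathbf K}(\gamma)=1$ in $\mathbb Z/2$. Let $\mu$ be the anti-symplectic involution of $K_{\tau,\tau'}$ induced by $(x,y)\mapsto(-x,y)$ on $E_\tau\times E_{\tau'}$ and $I_\mu=\alpha\mu^*\alpha^{-1}\in O(\mathbb L_{K3})$; then $\mathbb K_\gamma$ is exactly the $(-1)$-eigenlattice of $I_\mu$ and $\mathbb K_\gamma^{\perp_{\mathbb L_{K3}}}$ its $(+1)$-eigenlattice. *)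

theory Defs
  imports "HOL-Analysis.Analysis" "HOL-Library.Function_Algebras"
begin

text \<open>Lattice vectors in Z^n are functions nat => int vanishing
at indices >= n; rational/complex vectors likewise (nat => rat, nat => complex).
A symmetric bilinear form is given by a Gram matrix G :: nat => nat => int.\<close>

definition zvec :: "nat \<Rightarrow> (nat \<Rightarrow> 'a::zero) set" where
  "zvec n = {x. \<forall>i\<ge>n. x i = 0}"

definition bil :: "nat \<Rightarrow> (nat \<Rightarrow> nat \<Rightarrow> int) \<Rightarrow> (nat \<Rightarrow> 'a::comm_ring_1) \<Rightarrow> (nat \<Rightarrow> 'a) \<Rightarrow> 'a" where
  "bil n G x y = (\<Sum>i<n. \<Sum>j<n. of_int (G i j) * x i * y j)"

definition ivec :: "(nat \<Rightarrow> int) \<Rightarrow> (nat \<Rightarrow> 'a::ring_1)" where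
  "ivec x = (\<lambda>k. of_int (x k))"

text \<open>Gram matrices. U = hyperbolic plane; E8 is negative definite
(minus the Cartan matrix, Bourbaki labelling, 0-indexed).\<close>

definition e8_adj :: "nat \<Rightarrow> nat \<Rightarrow> bool" where
  "e8_adj i j = ((i, j) \<in> {(0,2),(2,0),(2,3),(3,2),(3,4),(4,3),(4,5),(5,4),
                               (5,6),(6,5),(6,7),(7,6),(1,3),(3,1)})"

definition gram_E8 :: "nat \<Rightarrow> nat \<Rightarrow> int" where
  "gram_E8 i j = (if i < 8 \<and> j < 8 then (if i = j then -2 else if e8_adj i j then 1 else 0) else 0)"

definition gram_U :: "nat \<Rightarrow> nat \<Rightarrow> int" where
  "gram_U i j = (if i < 2 \<and> j < 2 \<and> i \<noteq> j then 1 else 0)"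

text \<open>L_K3 = U^3 + E8^2 on indices 0..21.\<close>
definition gram_K3 :: "nat \<Rightarrow> nat \<Rightarrow> int" where
  "gram_K3 i j =
    (if i < 6 \<and> j < 6 then (if i div 2 = j div 2 then gram_U (i mod 2) (j mod 2) else 0)
     else if 6 \<le> i \<and> i < 14 \<and> 6 \<le> j \<and> j < 14 then gram_E8 (i - 6) (j - 6)
     else if 14 \<le> i \<and> i < 22 \<and> 14 \<le> j \<and> j < 22 then gram_E8 (i - 14) (j - 14)
     else 0)"

text \<open>U(2) + U + E8(2) on indices 0..11.\<close>
definition gram_Lambda :: "nat \<Rightarrow> nat \<Rightarrow> int" where
  "gram_Lambda i j =
    (if i < 2 \<and> j < 2 then 2 * gram_U i j
     else if 2 \<le> i \<and> i < 4 \<and> 2 \<le> j \<and> j < 4 then gram_U (i - 2) (j - 2)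
     else if 4 \<le> i \<and> i < 12 \<and> 4 \<le> j \<and> j < 12 then 2 * gram_E8 (i - 4) (j - 4)
     else 0)"

definition gram_U2U2 :: "nat \<Rightarrow> nat \<Rightarrow> int" where
  "gram_U2U2 i j = (if i < 4 \<and> j < 4 \<and> i div 2 = j div 2 then 2 * gram_U (i mod 2) (j mod 2) else 0)"

definition gram_E8_2 :: "nat \<Rightarrow> nat \<Rightarrow> int" where
  "gram_E8_2 i j = 2 * gram_E8 i j"

abbreviation bK3 :: "(nat \<Rightarrow> 'a::comm_ring_1) \<Rightarrow> (nat \<Rightarrow> 'a) \<Rightarrow> 'a" where
  "bK3 \<equiv> bil 22 gram_K3"

definition lat_span :: "nat \<Rightarrow> (nat \<Rightarrow> nat \<Rightarrow> int) \<Rightarrow> (nat \<Rightarrow> int) set" where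
  "lat_span m b = {(\<lambda>k. \<Sum>i<m. c i * b i k) | c. True}"

definition iso_to :: "nat \<Rightarrow> (nat \<Rightarrow> nat \<Rightarrow> int) \<Rightarrow> (nat \<Rightarrow> int) set \<Rightarrow> bool" where
  "iso_to m G S \<longleftrightarrow> (\<exists>b. (\<forall>i<m. b i \<in> zvec 22) \<and>
       (\<forall>i<m. \<forall>j<m. bK3 (b i) (b j) = G i j) \<and> S = lat_span m b)"

definition primitive_in_K3 :: "(nat \<Rightarrow> int) set \<Rightarrow> bool" where
  "primitive_in_K3 S \<longleftrightarrow> (\<forall>x\<in>zvec 22. \<forall>n::int. n \<noteq> 0 \<and> (\<lambda>k. n * x k) \<in> S \<longrightarrow> x \<in> S)"

text \<open>S \<otimes> Q, as rational vectors.\<close>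
definition q_span :: "(nat \<Rightarrow> int) set \<Rightarrow> (nat \<Rightarrow> rat) set" where
  "q_span S = {v. \<exists>n::int. n \<noteq> 0 \<and> (\<exists>s\<in>S. (\<lambda>k. of_int n * v k) = ivec s)}"

definition lat_dual :: "(nat \<Rightarrow> int) set \<Rightarrow> (nat \<Rightarrow> rat) set" where
  "lat_dual S = {v \<in> q_span S. \<forall>y\<in>S. bK3 v (ivec y) \<in> \<int>}"

definition orth_in :: "(nat \<Rightarrow> int) set \<Rightarrow> (nat \<Rightarrow> int) set \<Rightarrow> (nat \<Rightarrow> int) set" where
  "orth_in S K = {x \<in> S. \<forall>y\<in>K. bK3 x y = 0}"

definition cx_span :: "(nat \<Rightarrow> int) set \<Rightarrow> (nat \<Rightarrow> complex) set" where
  "cx_span S = {(\<lambda>k. \<Sum>i<n. c i * of_int (v i k)) | (n::nat) c v. \<forall>i<n. v i \<in> S}"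

text \<open>Affine cone over the period domain of S:
 \<omega> \<in> S \<otimes> C, \<omega>^2 = 0, <\<omega>, conj \<omega>> > 0 (the latter is real automatically).\<close>
definition period_cone :: "(nat \<Rightarrow> int) set \<Rightarrow> (nat \<Rightarrow> complex) set" where
  "period_cone S = {\<omega> \<in> cx_span S. bK3 \<omega> \<omega> = 0 \<and> 0 < Re (bK3 \<omega> (\<lambda>k. cnj (\<omega> k)))}"

definition hyp :: "(nat \<Rightarrow> int) \<Rightarrow> (nat \<Rightarrow> complex) set" where
  "hyp d = {\<omega>. bK3 \<omega> (ivec d) = 0}"

definition isometry_K3 :: "((nat \<Rightarrow> int) \<Rightarrow> (nat \<Rightarrow> int)) \<Rightarrow> bool" where
  "isometry_K3 I \<longleftrightarrow> bij_betw I (zvec 22) (zvec 22) \<and>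
     (\<forall>x\<in>zvec 22. \<forall>y\<in>zvec 22. I (x + y) = I x + I y \<and> bK3 (I x) (I y) = bK3 x y)"

end

theory Submission
  imports Defs
begin


lemma bil_add1: "bil n G (\<lambda>k. x k + y k) z = bil n G x z + bil n G y z"
  unfolding bil_def by (simp add: algebra_simps sum.distrib)
lemma bil_add2: "bil n G z (\<lambda>k. x k + y k) = bil n G z x + bil n G z y"
  unfolding bil_def by (simp add: algebra_simps sum.distrib)
lemma bil_diff1: "bil n G (\<lambda>k. x k - y k) z = bil n G x z - bil n G y z"
  unfolding bil_def by (simp add: algebra_simps sum_subtractf)
lemma bil_diff2: "bil n G z (\<lambda>k. x k - y k) = bil n G z x - bil n G z y"
  unfolding bil_def by (simp add: algebra_simps sum_subtractf)
lemma bil_scale1: "bil n G (\<lambda>k. c * x k) z = c * bil n G x z"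
  unfolding bil_def by (simp add: algebra_simps sum_distrib_left)
lemma bil_scale2: "bil n G z (\<lambda>k. c * x k) = c * bil n G z x"
  unfolding bil_def by (simp add: algebra_simps sum_distrib_left)
lemma bil_neg1: "bil n G (\<lambda>k. - x k) z = - bil n G x z"
  using bil_scale1[of n G "-1" x z] by simp
lemma bil_neg2: "bil n G z (\<lambda>k. - x k) = - bil n G z x"
  using bil_scale2[of n G z "-1" x] by simp
lemma bil_zero1: "bil n G (\<lambda>k. 0) z = 0"
  unfolding bil_def by simp
lemma bil_zero2: "bil n G z (\<lambda>k. 0) = 0"
  unfolding bil_def by simp
lemma bil_sum1: "finite A \<Longrightarrow> bil n G (\<lambda>k. \<Sum>i\<in>A. f i k) z = (\<Sum>i\<in>A. bil n G (f i) z)"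
  by (induct A rule: finite_induct) (simp_all add: bil_zero1 bil_add1)
lemma bil_sum2: "finite A \<Longrightarrow> bil n G z (\<lambda>k. \<Sum>i\<in>A. f i k) = (\<Sum>i\<in>A. bil n G z (f i))"
  by (induct A rule: finite_induct) (simp_all add: bil_zero2 bil_add2)
lemma bil_sym: "(\<And>i j. G i j = G j i) \<Longrightarrow> bil n G x y = bil n G y x"
  unfolding bil_def by (subst sum.swap) (simp add: algebra_simps)
lemma bil_ivec: "bil n G (ivec x) (ivec y) = (of_int (bil n G x y) :: 'a::comm_ring_1)"
  unfolding bil_def ivec_def by simp
lemma bil_of_real: "bil n G (\<lambda>k. complex_of_real (x k)) (\<lambda>k. complex_of_real (y k)) = complex_of_real (bil n G x y)"
  unfolding bil_def by simp
lemma bil_rat_real: "bil n G (\<lambda>k. real_of_rat (x k)) (\<lambda>k. real_of_rat (y k)) = real_of_rat (bil n G x y)"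
  unfolding bil_def by (simp add: of_rat_sum of_rat_mult)

lemma e8_adj_sym: "e8_adj i j = e8_adj j i"
  unfolding e8_adj_def by auto
lemma gram_U_sym: "gram_U i j = gram_U j i"
  unfolding gram_U_def by auto
lemma gram_E8_sym: "gram_E8 i j = gram_E8 j i"
  unfolding gram_E8_def using e8_adj_sym by auto
lemma gram_K3_sym: "gram_K3 i j = gram_K3 j i"
  unfolding gram_K3_def using gram_U_sym gram_E8_sym by auto
lemma bK3_sym: "bK3 x y = bK3 y x"
  by (rule bil_sym) (rule gram_K3_sym)

lemma ivec_add: "ivec (\<lambda>k. x k + y k) = (\<lambda>k. ivec x k + ivec y k)"
  unfolding ivec_def by simp
lemma ivec_inj: "(ivec x :: nat \<Rightarrow> 'a::ring_char_0) = ivec y \<Longrightarrow> x = y"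
  unfolding ivec_def by (rule ext) (metis of_int_eq_iff)


definition Kbasis :: "(nat \<Rightarrow> nat \<Rightarrow> int) \<Rightarrow> bool" where
  "Kbasis b \<longleftrightarrow> (\<forall>i<4. b i \<in> zvec 22) \<and> (\<forall>i<4. \<forall>j<4. bK3 (b i) (b j) = gram_U2U2 i j)"

definition fv :: "(nat \<Rightarrow> nat \<Rightarrow> int) \<Rightarrow> (nat \<Rightarrow> 'a::comm_ring_1) \<Rightarrow> nat \<Rightarrow> 'a" where
  "fv b v j = bK3 (ivec (b j)) v"

definition pK :: "(nat \<Rightarrow> 'a::field) \<Rightarrow> nat \<Rightarrow> 'a" where
  "pK g i = (if i = 0 then g 1 / 2 else if i = 1 then g 0 / 2 else if i = 2 then g 3 / 2 else g 2 / 2)"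

definition lc :: "(nat \<Rightarrow> nat \<Rightarrow> int) \<Rightarrow> (nat \<Rightarrow> 'a::comm_ring_1) \<Rightarrow> nat \<Rightarrow> 'a" where
  "lc b c = (\<lambda>k. \<Sum>i<4. c i * ivec (b i) k)"

definition embK :: "(nat \<Rightarrow> nat \<Rightarrow> int) \<Rightarrow> (nat \<Rightarrow> 'a::field) \<Rightarrow> nat \<Rightarrow> 'a" where
  "embK b g = lc b (pK g)"

definition qf :: "(nat \<Rightarrow> 'a::comm_ring_1) \<Rightarrow> 'a" where
  "qf g = g 0 * g 1 + g 2 * g 3"

definition Bf :: "(nat \<Rightarrow> 'a::field) \<Rightarrow> (nat \<Rightarrow> 'a) \<Rightarrow> 'a" where
  "Bf g h = (g 0 * h 1 + g 1 * h 0 + g 2 * h 3 + g 3 * h 2) / 2"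

lemma sum4: "(\<Sum>i<(4::nat). f i) = f 0 + f 1 + f 2 + (f 3 :: 'a::comm_monoid_add)"
  by (simp add: eval_nat_numeral lessThan_Suc add.assoc add.commute add.left_commute)

lemma pair_lc: assumes "Kbasis b" "j < 4"
  shows "fv b (lc b c) j = (\<Sum>i<4. c i * of_int (gram_U2U2 j i))"
proof -
  have "fv b (lc b c) j = (\<Sum>i<4. c i * bK3 (ivec (b j)) (ivec (b i)))"
    unfolding fv_def lc_def by (simp add: bil_sum2 bil_scale2)
  also have "\<dots> = (\<Sum>i<4. c i * of_int (gram_U2U2 j i))"
    using assms unfolding Kbasis_def by (intro sum.cong) (simp_all add: bil_ivec)
  finally show ?thesis .
qed

lemma fv_lc: assumes "Kbasis b"
  shows "fv b (lc b c) 0 = 2 * c 1" "fv b (lc b c) 1 = 2 * c 0"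
        "fv b (lc b c) 2 = 2 * c 3" "fv b (lc b c) 3 = 2 * c 2"
  using pair_lc[OF assms, of 0 c] pair_lc[OF assms, of 1 c] pair_lc[OF assms, of 2 c] pair_lc[OF assms, of 3 c]
  by (simp_all add: sum4 gram_U2U2_def gram_U_def mult.commute)

lemma fv_emb: assumes "Kbasis b" "j < 4"
  shows "fv b (embK b g) j = (g j :: 'a::field_char_0)"
proof -
  have "j = 0 \<or> j = 1 \<or> j = 2 \<or> j = 3" using assms(2) by auto
  then show ?thesis unfolding embK_def using fv_lc[OF assms(1), of "pK g"]
    by (auto simp: pK_def)
qed

lemma bil_lc_left: "bK3 (lc b c) v = (\<Sum>i<4. c i * fv b v i)"
  unfolding lc_def fv_def by (simp add: bil_sum1 bil_scale1)

lemma bil_lc_right: "bK3 v (lc b c) = (\<Sum>i<4. c i * fv b v i)"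
  by (subst bK3_sym) (rule bil_lc_left)

lemma emb_pair: "bK3 (embK b g) v = Bf g (fv b v :: nat \<Rightarrow> 'a::field)"
  unfolding embK_def bil_lc_left sum4 Bf_def pK_def by (simp add: field_simps)

lemma emb_pair_r: "bK3 v (embK b g) = Bf g (fv b v :: nat \<Rightarrow> 'a::field)"
  by (subst bK3_sym) (rule emb_pair)

lemma emb_norm: assumes "Kbasis b"
  shows "bK3 (embK b g) (embK b g) = qf (g :: nat \<Rightarrow> 'a::field_char_0)"
  unfolding emb_pair Bf_def qf_def using fv_emb[OF assms, of _ g] by (simp add: field_simps)

lemma emb_lc: assumes "Kbasis b"
  shows "embK b (fv b (lc b c)) = (lc b c :: nat \<Rightarrow> 'a::field_char_0)"
proof -
  have "pK (fv b (lc b c)) i = c i" if "i < 4" for i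
  proof -
    have "i = 0 \<or> i = 1 \<or> i = 2 \<or> i = 3" using that by auto
    then show ?thesis using fv_lc[OF assms, of c] by (auto simp: pK_def)
  qed
  then show ?thesis unfolding embK_def lc_def by (intro ext sum.cong) auto
qed

lemma Bf_sym: "Bf g h = Bf h g"
  unfolding Bf_def by (simp add: algebra_simps)

lemma fv_add: "fv b (\<lambda>k. x k + y k) = (\<lambda>j. fv b x j + fv b y j)"
  unfolding fv_def by (simp add: bil_add2)
lemma fv_diff: "fv b (\<lambda>k. x k - y k) = (\<lambda>j. fv b x j - fv b y j)"
  unfolding fv_def by (simp add: bil_diff2)
lemma fv_scale: "fv b (\<lambda>k. c * x k) = (\<lambda>j. c * fv b x j)"
  unfolding fv_def by (simp add: bil_scale2)

lemma lc_add: "lc b (\<lambda>i. c i + d i) = (\<lambda>k. lc b c k + lc b d k)"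
  unfolding lc_def by (simp add: algebra_simps sum.distrib)
lemma lc_scale: "lc b (\<lambda>i. a * c i) = (\<lambda>k. a * lc b c k)"
  unfolding lc_def by (simp add: algebra_simps sum_distrib_left)
lemma pK_add: "pK (\<lambda>i. g i + h i) = (\<lambda>i. pK g i + pK h i)"
  unfolding pK_def by (auto simp: add_divide_distrib)
lemma pK_scale: "pK (\<lambda>i. a * g i) = (\<lambda>i. a * pK g i)"
  unfolding pK_def by auto
lemma embK_add: "embK b (\<lambda>i. g i + h i) = (\<lambda>k. embK b g k + embK b h k)"
  unfolding embK_def pK_add lc_add ..
lemma embK_scale: "embK b (\<lambda>i. a * g i) = (\<lambda>k. a * embK b g k)"
  unfolding embK_def pK_scale lc_scale ..


definition lc8 :: "(nat \<Rightarrow> nat \<Rightarrow> int) \<Rightarrow> (nat \<Rightarrow> 'a::comm_ring_1) \<Rightarrow> nat \<Rightarrow> 'a" where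
  "lc8 b c = (\<lambda>k. \<Sum>i<8. c i * ivec (b i) k)"

definition Ebasis :: "(nat \<Rightarrow> nat \<Rightarrow> int) \<Rightarrow> bool" where
  "Ebasis b \<longleftrightarrow> (\<forall>i<8. b i \<in> zvec 22) \<and> (\<forall>i<8. \<forall>j<8. bK3 (b i) (b j) = gram_E8_2 i j)"

lemma sum8: "(\<Sum>i<(8::nat). f i) = f 0 + f 1 + f 2 + f 3 + f 4 + f 5 + f 6 + (f 7 :: 'a::comm_monoid_add)"
  by (simp add: eval_nat_numeral lessThan_Suc add.assoc add.commute add.left_commute)

definition E8q :: "(nat \<Rightarrow> 'a::comm_ring_1) \<Rightarrow> 'a" where
  "E8q r = (\<Sum>k<8. \<Sum>l<8. r k * r l * of_int (gram_E8 k l))"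

lemma E8q_expand: "E8q r = - 2 * (r 0 * r 0 + r 1 * r 1 + r 2 * r 2 + r 3 * r 3 + r 4 * r 4 + r 5 * r 5 + r 6 * r 6 + r 7 * r 7)
   + 2 * (r 0 * r 2 + r 2 * r 3 + r 3 * r 4 + r 4 * r 5 + r 5 * r 6 + r 6 * r 7 + r 1 * r 3)"
  unfolding E8q_def sum8 by (simp add: gram_E8_def e8_adj_def algebra_simps)

lemma E8q_sos: "- E8q (r :: nat \<Rightarrow> real) = 2 * (r 0 - r 2 / 2)^2 + 2 * (r 1 - r 3 / 2)^2 + 2 * (r 7 - r 6 / 2)^2
   + 3/2 * (r 6 - 2 * r 5 / 3)^2 + 4/3 * (r 5 - 3 * r 4 / 4)^2 + 3/2 * (r 2 - 2 * r 3 / 3)^2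
   + 5/4 * (r 4 - 4 * r 3 / 5)^2 + 1/30 * (r 3)^2"
  unfolding E8q_expand by (simp add: power2_eq_square algebra_simps)

lemma E8q_nonpos: "E8q (r :: nat \<Rightarrow> real) \<le> 0"
proof -
  have "0 \<le> - E8q r" unfolding E8q_sos by (intro add_nonneg_nonneg mult_nonneg_nonneg) auto
  then show ?thesis by simp
qed

lemma E8q_zero: assumes "E8q (r :: nat \<Rightarrow> real) = 0" shows "\<forall>k<8. r k = 0"
proof -
  have z: "2 * (r 0 - r 2 / 2)^2 + 2 * (r 1 - r 3 / 2)^2 + 2 * (r 7 - r 6 / 2)^2
   + 3/2 * (r 6 - 2 * r 5 / 3)^2 + 4/3 * (r 5 - 3 * r 4 / 4)^2 + 3/2 * (r 2 - 2 * r 3 / 3)^2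
   + 5/4 * (r 4 - 4 * r 3 / 5)^2 + 1/30 * (r 3)^2 = 0"
    using E8q_sos[of r] assms by simp
  have nn: "0 \<le> (x::real)^2" for x by simp
  have "(r 3)^2 = 0" "(r 4 - 4 * r 3 / 5)^2 = 0" "(r 2 - 2 * r 3 / 3)^2 = 0" "(r 5 - 3 * r 4 / 4)^2 = 0"
     "(r 6 - 2 * r 5 / 3)^2 = 0" "(r 7 - r 6 / 2)^2 = 0" "(r 1 - r 3 / 2)^2 = 0" "(r 0 - r 2 / 2)^2 = 0"
    using z nn[of "r 3"] nn[of "r 4 - 4 * r 3 / 5"] nn[of "r 2 - 2 * r 3 / 3"] nn[of "r 5 - 3 * r 4 / 4"]
     nn[of "r 6 - 2 * r 5 / 3"] nn[of "r 7 - r 6 / 2"] nn[of "r 1 - r 3 / 2"] nn[of "r 0 - r 2 / 2"]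
    by linarith+
  then have "r 3 = 0" "r 4 = 0" "r 2 = 0" "r 5 = 0" "r 6 = 0" "r 7 = 0" "r 1 = 0" "r 0 = 0" by simp_all
  then show ?thesis by (auto simp: less_Suc_eq numeral_eq_Suc)
qed

lemma E8q_int_even: "even (E8q (r :: nat \<Rightarrow> int))"
  unfolding E8q_expand by simp

lemma E8q_of_int: "E8q (\<lambda>k. real_of_int (r k)) = real_of_int (E8q r)"
  unfolding E8q_def by simp

lemma lc8_norm: assumes "Ebasis b"
  shows "bK3 (lc8 b r) (lc8 b r) = 2 * E8q r"
proof -
  have "bK3 (lc8 b r) (lc8 b r) = (\<Sum>i<8. \<Sum>j<8. r i * r j * bK3 (ivec (b i)) (ivec (b j)))"
    unfolding lc8_def by (simp add: bil_sum1 bil_sum2 bil_scale1 bil_scale2 sum_distrib_left mult.assoc)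
  also have "\<dots> = (\<Sum>i<8. \<Sum>j<8. r i * r j * of_int (gram_E8_2 i j))"
    using assms unfolding Ebasis_def by (intro sum.cong) (simp_all add: bil_ivec)
  also have "\<dots> = 2 * E8q r"
    unfolding E8q_def gram_E8_2_def by (simp add: sum_distrib_left algebra_simps)
  finally show ?thesis .
qed

lemma lc8_nonpos: "Ebasis b \<Longrightarrow> bK3 (lc8 b r) (lc8 b (r :: nat \<Rightarrow> real)) \<le> 0"
  using lc8_norm[of b r] E8q_nonpos[of r] by simp

lemma latspan8: "z \<in> lat_span 8 b \<Longrightarrow> \<exists>c. (ivec z :: nat \<Rightarrow> 'a::comm_ring_1) = lc8 b (\<lambda>i. of_int (c i)) \<and> z = (\<lambda>k. \<Sum>i<8. c i * b i k)"
  unfolding lat_span_def lc8_def ivec_def by auto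

lemma E_int_props: assumes "Ebasis b" "z \<in> lat_span 8 b"
  shows "4 dvd bK3 z z" "bK3 z z \<le> 0" "bK3 z z = 0 \<Longrightarrow> z = (\<lambda>k. 0)"
proof -
  obtain c where c: "(ivec z :: nat \<Rightarrow> real) = lc8 b (\<lambda>i. of_int (c i))" "z = (\<lambda>k. \<Sum>i<8. c i * b i k)"
    using latspan8[OF assms(2)] by blast
  have "real_of_int (bK3 z z) = bK3 (ivec z) (ivec z :: nat \<Rightarrow> real)" by (simp add: bil_ivec)
  also have "\<dots> = 2 * E8q (\<lambda>i. real_of_int (c i))" unfolding c(1) by (rule lc8_norm[OF assms(1)])
  finally have eq: "real_of_int (bK3 z z) = 2 * real_of_int (E8q c)" by (simp add: E8q_of_int)
  then have eqi: "bK3 z z = 2 * E8q c" by linarith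
  show "4 dvd bK3 z z" using E8q_int_even[of c] eqi by auto
  show "bK3 z z \<le> 0" using eq E8q_nonpos[of "\<lambda>i. real_of_int (c i)"] E8q_of_int[of c] by linarith
  assume "bK3 z z = 0"
  then have "E8q (\<lambda>i. real_of_int (c i)) = 0" using eq E8q_of_int[of c] by simp
  then have "\<forall>k<8. c k = 0" using E8q_zero by fastforce
  then show "z = (\<lambda>k. 0)" unfolding c(2) by simp
qed


lemma ivec_int: "(ivec x :: nat \<Rightarrow> int) = x"
  unfolding ivec_def by simp

lemma fv_ivec: "fv b (ivec v) j = (of_int (fv b v j) :: 'a::comm_ring_1)"
  unfolding fv_def by (simp add: bil_ivec ivec_int)

lemma latspan_add: "x \<in> lat_span m bb \<Longrightarrow> y \<in> lat_span m bb \<Longrightarrow> (\<lambda>k. x k + y k) \<in> lat_span m bb"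
proof -
  assume "x \<in> lat_span m bb" "y \<in> lat_span m bb"
  then obtain c d where "x = (\<lambda>k. \<Sum>i<m. c i * bb i k)" "y = (\<lambda>k. \<Sum>i<m. d i * bb i k)"
    unfolding lat_span_def by auto
  then have "(\<lambda>k. x k + y k) = (\<lambda>k. \<Sum>i<m. (c i + d i) * bb i k)"
    by (simp add: algebra_simps sum.distrib)
  then show ?thesis unfolding lat_span_def by auto
qed

lemma latspan_scale: "x \<in> lat_span m bb \<Longrightarrow> (\<lambda>k. a * x k) \<in> lat_span m bb"
proof -
  assume "x \<in> lat_span m bb"
  then obtain c where "x = (\<lambda>k. \<Sum>i<m. c i * bb i k)"
    unfolding lat_span_def by auto
  then have "(\<lambda>k. a * x k) = (\<lambda>k. \<Sum>i<m. (a * c i) * bb i k)"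
    by (simp add: algebra_simps sum_distrib_left)
  then show ?thesis unfolding lat_span_def by auto
qed

lemma latspan_diff: "x \<in> lat_span m bb \<Longrightarrow> y \<in> lat_span m bb \<Longrightarrow> (\<lambda>k. x k - y k) \<in> lat_span m bb"
  using latspan_add[of x m bb "\<lambda>k. (-1) * y k"] latspan_scale[of y m bb "-1"] by simp

lemma latspan_basis: "i < m \<Longrightarrow> bb i \<in> lat_span m bb"
proof -
  assume i: "i < m"
  have "(\<Sum>j<m. (if j = i then 1 else 0) * bb j k) = bb i k" for k
  proof -
    have "(\<Sum>j<m. (if j = i then 1 else 0) * bb j k) = (\<Sum>j<m. (if i = j then bb j k else 0))"
      by (rule sum.cong) auto
    then show ?thesis using i by (simp add: sum.delta)
  qed
  then have "bb i = (\<lambda>k. \<Sum>j<m. (if j = i then 1 else 0) * bb j k)" by simp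
  then show ?thesis unfolding lat_span_def
    apply (intro CollectI exI[where x="\<lambda>j. if j = i then 1 else 0"]) by simp
qed

lemma latspan_zvec: "(\<forall>i<m. bb i \<in> zvec n) \<Longrightarrow> x \<in> lat_span m bb \<Longrightarrow> x \<in> zvec n"
  unfolding lat_span_def zvec_def by auto

lemma latspanK: "x \<in> lat_span 4 b \<Longrightarrow> \<exists>c. x = (\<lambda>k. \<Sum>i<4. c i * b i k) \<and> (ivec x :: nat \<Rightarrow> 'a::comm_ring_1) = lc b (\<lambda>i. of_int (c i))"
  unfolding lat_span_def lc_def ivec_def by auto

lemma fvK_even: assumes "Kbasis b" "x \<in> lat_span 4 b" "j < 4"
  shows "even (fv b x j)"
proof -
  obtain c where c: "(ivec x :: nat \<Rightarrow> int) = lc b (\<lambda>i. of_int (c i))" using latspanK[OF assms(2)] by blast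
  then have "x = lc b c" by (simp add: ivec_int)
  then show ?thesis using fv_lc[OF assms(1), of c] assms(3)
    by (auto simp: less_Suc_eq numeral_eq_Suc)
qed

lemma zvec_diff: "x \<in> zvec n \<Longrightarrow> y \<in> zvec n \<Longrightarrow> (\<lambda>k. x k - y k :: int) \<in> zvec n"
  unfolding zvec_def by auto

lemma orthK_iff: assumes "K = lat_span 4 b"
  shows "(\<forall>y\<in>K. bK3 z y = 0) \<longleftrightarrow> (\<forall>j<4. fv b z j = 0)"
proof
  assume "\<forall>y\<in>K. bK3 z y = 0"
  then show "\<forall>j<4. fv b z j = 0" unfolding fv_def using latspan_basis[of _ 4 b] assms
    by (metis bK3_sym ivec_int)
next
  assume h: "\<forall>j<4. fv b z j = 0"
  show "\<forall>y\<in>K. bK3 z y = 0"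
  proof
    fix y assume "y \<in> K"
    then obtain c where c: "(ivec y :: nat \<Rightarrow> int) = lc b (\<lambda>i. of_int (c i))" using latspanK assms by blast
    have "bK3 z y = bK3 z (lc b c)" using c by (simp add: ivec_int)
    also have "\<dots> = 0" unfolding bil_lc_right using h by (simp add: fv_def bK3_sym)
    finally show "bK3 z y = 0" .
  qed
qed

lemma Lam_split: assumes "Kbasis b" "K = lat_span 4 b" "Lam = lat_span 12 bL" "K \<subseteq> Lam"
   "\<forall>i<12. bL i \<in> zvec 22"
   "v \<in> Lam" "\<forall>j<4. even (fv b v j)"
  shows "\<exists>z \<in> orth_in Lam K. (\<lambda>k. ivec v k - embK b (fv b (ivec v)) k) = (ivec z :: nat \<Rightarrow> 'a::field_char_0)"
proof -
  define c where "c i = (if i = 0 then fv b v 1 div 2 else if i = 1 then fv b v 0 div 2 else if i = 2 then fv b v 3 div 2 else fv b v 2 div 2)" for i :: nat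
  define kk where "kk = (\<lambda>k. \<Sum>i<4. c i * b i k)"
  have kkK: "kk \<in> K" unfolding kk_def assms(2) lat_span_def by auto
  have ivk: "(ivec kk :: nat \<Rightarrow> 'a) = lc b (\<lambda>i. of_int (c i))" unfolding kk_def lc_def ivec_def by simp
  have pk: "pK (fv b (ivec v :: nat \<Rightarrow> 'a)) i = of_int (c i)" if "i < 4" for i
  proof -
    have e: "even (fv b v j)" "of_int (fv b v j) / 2 = (of_int (fv b v j div 2) :: 'a)" if "j < 4" for j
      using assms(7) that by (auto elim!: evenE)
    have "i = 0 \<or> i = 1 \<or> i = 2 \<or> i = 3" using that by auto
    then show ?thesis using e[of 0] e[of 1] e[of 2] e[of 3] by (auto simp: pK_def c_def fv_ivec)
  qed
  have emb: "embK b (fv b (ivec v :: nat \<Rightarrow> 'a)) = ivec kk"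
    unfolding ivk embK_def lc_def using pk by (intro ext sum.cong) auto
  define z where "z = (\<lambda>k. v k - kk k)"
  have zL: "z \<in> Lam" unfolding z_def assms(3) apply (rule latspan_diff) using assms kkK by auto
  have fz: "fv b z j = 0" if "j < 4" for j
  proof -
    have "fv b kk j = fv b v j"
    proof -
      have "kk = lc b c" unfolding kk_def lc_def ivec_def by simp
      have ev: "2 * (fv b v j div 2) = fv b v j" if "j < 4" for j
        using assms(7) that by simp
      have "j = 0 \<or> j = 1 \<or> j = 2 \<or> j = 3" using that by auto
      then show ?thesis using fv_lc[OF assms(1), of c] ev[of 0] ev[of 1] ev[of 2] ev[of 3] \<open>kk = lc b c\<close>
        by (auto simp: c_def)
    qed
    then show ?thesis unfolding z_def fv_diff by simp
  qed
  have "z \<in> orth_in Lam K" unfolding orth_in_def using zL fz orthK_iff[OF assms(2)] by auto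
  moreover have "(\<lambda>k. ivec v k - embK b (fv b (ivec v)) k) = (ivec z :: nat \<Rightarrow> 'a)"
    unfolding emb z_def by (simp add: ivec_def)
  ultimately show ?thesis by blast
qed


definition Setup :: "(nat \<Rightarrow> nat \<Rightarrow> int) \<Rightarrow> (nat \<Rightarrow> nat \<Rightarrow> int) \<Rightarrow> (nat \<Rightarrow> nat \<Rightarrow> int) \<Rightarrow> (nat \<Rightarrow> int) set \<Rightarrow> (nat \<Rightarrow> int) set \<Rightarrow> bool" where
  "Setup b bE bL K Lam \<longleftrightarrow> Kbasis b \<and> K = lat_span 4 b \<and> Lam = lat_span 12 bL \<and> (\<forall>i<12. bL i \<in> zvec 22)
     \<and> K \<subseteq> Lam \<and> Ebasis bE \<and> orth_in Lam K = lat_span 8 bE"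

definition rspan :: "(nat \<Rightarrow> int) set \<Rightarrow> (nat \<Rightarrow> real) set" where
  "rspan S = {(\<lambda>k. \<Sum>i<n. c i * of_int (w i k)) | (n::nat) c w. \<forall>i<n. w i \<in> S}"

definition phi :: "(nat \<Rightarrow> nat \<Rightarrow> int) \<Rightarrow> (nat \<Rightarrow> 'a::field_char_0) \<Rightarrow> nat \<Rightarrow> 'a" where
  "phi b v = (\<lambda>k. v k - embK b (fv b v) k)"

lemma fv_sum: "finite A \<Longrightarrow> fv b (\<lambda>k. \<Sum>i\<in>A. f i k) = (\<lambda>j. \<Sum>i\<in>A. fv b (f i) j)"
  unfolding fv_def by (simp add: bil_sum2)

lemma pK_sum: "pK (\<lambda>j. \<Sum>i\<in>A. g i j) = (\<lambda>j. \<Sum>i\<in>A. pK (g i) j)"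
  unfolding pK_def by (auto simp: sum_divide_distrib)

lemma lc_sum: "lc b (\<lambda>j. \<Sum>i\<in>A. g i j) = (\<lambda>k. \<Sum>i\<in>A. lc b (g i) k)"
  unfolding lc_def by (simp add: sum_distrib_right sum.swap[of _ A])

lemma embK_sum: "embK b (\<lambda>j. \<Sum>i\<in>A. g i j) = (\<lambda>k. \<Sum>i\<in>A. embK b (g i) k)"
  unfolding embK_def pK_sum lc_sum ..

lemma lc8_sum: "lc8 b (\<lambda>j. \<Sum>i\<in>A. g i j) = (\<lambda>k. \<Sum>i\<in>A. lc8 b (g i) k)"
  unfolding lc8_def by (simp add: sum_distrib_right sum.swap[of _ A])

lemma lc8_scale: "lc8 b (\<lambda>i. a * c i) = (\<lambda>k. a * lc8 b c k)"
  unfolding lc8_def by (simp add: algebra_simps sum_distrib_left)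

lemma phi_sum: "finite A \<Longrightarrow> phi b (\<lambda>k. \<Sum>i\<in>A. c i * v i k) = (\<lambda>k. \<Sum>i\<in>A. c i * phi b (v i) k)"
proof -
  assume True: "finite A"
  have "fv b (\<lambda>k. \<Sum>i\<in>A. c i * v i k) = (\<lambda>j. \<Sum>i\<in>A. c i * fv b (v i) j)"
    using fv_sum[OF True, of b "\<lambda>i k. c i * v i k"] by (simp add: fv_scale)
  then show ?thesis unfolding phi_def
    by (simp add: embK_sum embK_scale sum_subtractf algebra_simps)
qed

lemma phi_scale: "phi b (\<lambda>k. a * v k) = (\<lambda>k. a * phi b v k)"
  unfolding phi_def fv_scale embK_scale by (simp add: algebra_simps)

lemma fv_phi: "Kbasis b \<Longrightarrow> j < 4 \<Longrightarrow> fv b (phi b v) j = 0"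
  unfolding phi_def fv_diff by (simp add: fv_emb)

lemma phi_Lam: assumes S: "Setup b bE bL K Lam" and w: "w \<in> Lam"
  shows "\<exists>R. phi b (ivec w) = (lc8 bE R :: nat \<Rightarrow> real)"
proof -
  have Kb: "Kbasis b" and Kd: "K = lat_span 4 b" and Ld: "Lam = lat_span 12 bL"
    and Lz: "\<forall>i<12. bL i \<in> zvec 22" and KL: "K \<subseteq> Lam" and Eb: "Ebasis bE"
    and Ed: "orth_in Lam K = lat_span 8 bE"
    using S unfolding Setup_def by auto
  have w2: "(\<lambda>k. 2 * w k) \<in> Lam" using latspan_scale w Ld by blast
  have ev: "\<forall>j<4. even (fv b (\<lambda>k. 2 * w k) j)"
    using fv_scale[of b 2 w] by simp
  obtain z where z: "z \<in> orth_in Lam K" "phi b (ivec (\<lambda>k. 2 * w k)) = (ivec z :: nat \<Rightarrow> real)"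
    using Lam_split[OF Kb Kd Ld KL Lz w2 ev] unfolding phi_def by blast
  obtain c where c: "(ivec z :: nat \<Rightarrow> real) = lc8 bE (\<lambda>i. of_int (c i))"
    using latspan8[of z bE] z(1) Ed by auto
  have "ivec (\<lambda>k. 2 * w k) = (\<lambda>k. 2 * (ivec w k :: real))" unfolding ivec_def by simp
  then have "phi b (ivec (\<lambda>k. 2 * w k)) = (\<lambda>k. 2 * (phi b (ivec w) k :: real))"
    using phi_scale[of b "2::real" "ivec w"] by simp
  then have "phi b (ivec w) = (\<lambda>k. (1/2) * (ivec z k :: real))"
    using z(2) by (auto simp: fun_eq_iff)
  also have "\<dots> = lc8 bE (\<lambda>i. (1/2) * of_int (c i))" unfolding c lc8_scale ..
  finally show ?thesis by blast
qed

lemma lemmaL: assumes S: "Setup b bE bL K Lam" and v: "v \<in> rspan Lam"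
  shows "bK3 (phi b v) (phi b v) \<le> 0"
proof -
  have Eb: "Ebasis bE" using S unfolding Setup_def by auto
  obtain n :: nat and c w where v: "v = (\<lambda>k. \<Sum>i<n. c i * of_int (w i k))" "\<forall>i<n. w i \<in> Lam"
    using v unfolding rspan_def by auto
  have "\<forall>i\<in>{..<n}. \<exists>R. phi b (ivec (w i)) = (lc8 bE R :: nat \<Rightarrow> real)"
    using phi_Lam[OF S] v(2) by auto
  then obtain R where R: "\<forall>i\<in>{..<n}. phi b (ivec (w i)) = (lc8 bE (R i) :: nat \<Rightarrow> real)"
    by metis
  have "phi b v = (\<lambda>k. \<Sum>i<n. c i * phi b (ivec (w i)) k)"
    unfolding v(1) using phi_sum[of "{..<n}" b c "\<lambda>i. ivec (w i)"] by (simp add: ivec_def)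
  also have "\<dots> = (\<lambda>k. \<Sum>i<n. c i * lc8 bE (R i) k)" using R by simp
  also have "\<dots> = lc8 bE (\<lambda>l. \<Sum>i<n. c i * R i l)"
    unfolding lc8_sum by (simp add: lc8_scale)
  finally show ?thesis using lc8_nonpos[OF Eb] by simp
qed


lemma qspanK: assumes S: "Setup b bE bL K Lam" and w: "w \<in> q_span K"
  shows "w = embK b (fv b w)"
proof -
  have Kb: "Kbasis b" and Kd: "K = lat_span 4 b" using S unfolding Setup_def by auto
  obtain n s where ns: "n \<noteq> 0" "s \<in> K" "(\<lambda>k. of_int n * w k) = ivec s"
    using w unfolding q_span_def by auto
  obtain c where c: "(ivec s :: nat \<Rightarrow> rat) = lc b (\<lambda>i. of_int (c i))" using latspanK[of s b] ns(2) Kd by blast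
  have "w = (\<lambda>k. (1 / of_int n) * lc b (\<lambda>i. of_int (c i)) k)"
  proof
    fix k have "of_int n * w k = lc b (\<lambda>i. of_int (c i)) k" using ns(3) c by (metis)
    then show "w k = (1 / of_int n) * lc b (\<lambda>i. of_int (c i)) k" using ns(1) by (simp add: field_simps)
  qed
  also have "\<dots> = lc b (\<lambda>i. (1 / of_int n) * of_int (c i))" unfolding lc_scale ..
  finally have "w = lc b (\<lambda>i. (1 / of_int n) * of_int (c i))" .
  then show ?thesis using emb_lc[OF Kb] by metis
qed

lemma orth_fv: assumes S: "Setup b bE bL K Lam" and y: "y \<in> orth_in Lam K" and j: "j < 4"
  shows "fv b y j = 0"
  using y orthK_iff[of K b y] S j unfolding Setup_def orth_in_def by auto

lemma qspanE_orth: assumes S: "Setup b bE bL K Lam" and w: "w \<in> q_span (orth_in Lam K)" and j: "j < 4"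
  shows "fv b w j = 0"
proof -
  obtain n s where ns: "n \<noteq> 0" "s \<in> orth_in Lam K" "(\<lambda>k. of_int n * w k) = ivec s"
    using w unfolding q_span_def by auto
  have "of_int n * fv b w j = fv b (ivec s) j" using ns(3) fv_scale[of b "of_int n" w] by metis
  also have "\<dots> = 0" using orth_fv[OF S ns(2) j] by (simp add: fv_ivec)
  finally show ?thesis using ns(1) by simp
qed

lemma parity_int: assumes "odd (u0 * u1 + u2 * u3 :: int)"
  shows "odd ((n*u0+2*t0)*(n*u1+2*t1)+(n*u2+2*t2)*(n*u3+2*t3)) \<or> 4 dvd ((n*u0+2*t0)*(n*u1+2*t1)+(n*u2+2*t2)*(n*u3+2*t3))"
proof (cases "even n")
  case True
  then obtain m where "n = 2 * m" by auto
  then have "(n*u0+2*t0)*(n*u1+2*t1)+(n*u2+2*t2)*(n*u3+2*t3) = 4 * ((m*u0+t0)*(m*u1+t1)+(m*u2+t2)*(m*u3+t3))"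
    by (simp add: algebra_simps)
  then show ?thesis by simp
next
  case False
  have e: "(n*u0+2*t0)*(n*u1+2*t1)+(n*u2+2*t2)*(n*u3+2*t3) = n * n * (u0 * u1 + u2 * u3) + 2 * (n*(u0*t1+t0*u1+u2*t3+t2*u3) + 2*(t0*t1+t2*t3))"
    by (simp add: algebra_simps)
  have "odd (n * n * (u0 * u1 + u2 * u3))" using False assms by simp
  then show ?thesis unfolding e by simp
qed

lemma rat_int_floor: "(x::rat) \<in> \<int> \<Longrightarrow> of_int (floor x) = x"
  by (metis Ints_cases floor_of_int)

lemma parity_Lam: assumes S: "Setup b bE bL K Lam"
  and d1: "d1 \<in> lat_dual K" and d2: "d2 \<in> lat_dual (orth_in Lam K)"
  and L: "ivec ` Lam = {(\<lambda>k. of_int n * (d1 k + d2 k) + of_int (x k) + of_int (y k)) | n x y. x \<in> K \<and> y \<in> orth_in Lam K}"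
  and odd: "bK3 d1 d1 = of_int (2 * m + 1)"
  and v: "v \<in> Lam"
  shows "odd (qf (fv b v)) \<or> 4 dvd qf (fv b v)"
proof -
  have Kb: "Kbasis b" and Kd: "K = lat_span 4 b" using S unfolding Setup_def by auto
  have bK: "b j \<in> K" if "j < 4" for j using latspan_basis[of j 4 b] that Kd by simp
  define U where "U j = floor (fv b d1 j)" for j
  have U: "of_int (U j) = fv b d1 j" if "j < 4" for j
  proof -
    have "bK3 d1 (ivec (b j)) \<in> \<int>" using d1 bK[OF that] unfolding lat_dual_def by auto
    then have "fv b d1 j \<in> \<int>" unfolding fv_def by (simp add: bK3_sym)
    then show ?thesis unfolding U_def by (rule rat_int_floor)
  qed
  have d1q: "d1 \<in> q_span K" using d1 unfolding lat_dual_def by auto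
  have "bK3 d1 d1 = qf (fv b d1)" using qspanK[OF S d1q] emb_norm[OF Kb] by metis
  also have "\<dots> = of_int (qf U)" unfolding qf_def using U by simp
  finally have "(of_int (2 * m + 1) :: rat) = of_int (qf U)" using odd by simp
  then have "2 * m + 1 = qf U" by (simp only: of_int_eq_iff)
  then have oddU: "odd (qf U)" by presburger
  obtain n x y where nxy: "x \<in> K" "y \<in> orth_in Lam K"
    "(ivec v :: nat \<Rightarrow> rat) = (\<lambda>k. of_int n * (d1 k + d2 k) + of_int (x k) + of_int (y k))"
  proof -
    have "(ivec v :: nat \<Rightarrow> rat) \<in> ivec ` Lam" using v by blast
    then have "\<exists>n x y. (ivec v :: nat \<Rightarrow> rat) = (\<lambda>k. of_int n * (d1 k + d2 k) + of_int (x k) + of_int (y k)) \<and> x \<in> K \<and> y \<in> orth_in Lam K"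
      unfolding L by blast
    then show ?thesis using that by blast
  qed
  have d2q: "d2 \<in> q_span (orth_in Lam K)" using d2 unfolding lat_dual_def by auto
  define t where "t j = fv b x j div 2" for j
  have fvv: "fv b v j = n * U j + 2 * t j" if j: "j < 4" for j
  proof -
    have "(of_int (fv b v j) :: rat) = fv b (ivec v) j" by (simp add: fv_ivec)
    also have "\<dots> = of_int n * (fv b d1 j + fv b d2 j) + fv b (ivec x) j + fv b (ivec y) j"
      unfolding nxy(3) fv_add fv_scale by (simp add: ivec_def algebra_simps)
    also have "\<dots> = of_int n * of_int (U j) + of_int (fv b x j)"
      using U[OF j] qspanE_orth[OF S d2q j] orth_fv[OF S nxy(2) j] by (simp add: fv_ivec)
    finally have "(of_int (fv b v j) :: rat) = of_int (n * U j + fv b x j)" by simp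
    then have "fv b v j = n * U j + fv b x j" by (simp only: of_int_eq_iff)
    moreover have "even (fv b x j)" using fvK_even[OF Kb _ j] nxy(1) Kd by simp
    ultimately show ?thesis unfolding t_def by simp
  qed
  have "qf (fv b v) = (n*U 0+2*t 0)*(n*U 1+2*t 1)+(n*U 2+2*t 2)*(n*U 3+2*t 3)"
    unfolding qf_def using fvv[of 0] fvv[of 1] fvv[of 2] fvv[of 3] by simp
  then show ?thesis using parity_int[of "U 0" "U 1" "U 2" "U 3" n "t 0" "t 1" "t 2" "t 3"] oddU
    unfolding qf_def by simp
qed

lemma neg_qf: assumes S: "Setup b bE bL K Lam"
  and dK: "\<delta>K \<in> lat_dual K" and dE: "\<delta>E \<in> lat_dual (orth_in Lam K)"
  and sum: "ivec \<delta> = \<delta>K + \<delta>E" and neg: "bK3 \<delta>K \<delta>K < 0"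
  shows "qf (fv b \<delta>) < 0"
proof -
  have Kb: "Kbasis b" using S unfolding Setup_def by auto
  have dKq: "\<delta>K \<in> q_span K" and dEq: "\<delta>E \<in> q_span (orth_in Lam K)" using dK dE unfolding lat_dual_def by auto
  have f: "fv b \<delta>K j = of_int (fv b \<delta> j)" if j: "j < 4" for j
  proof -
    have "\<delta>K = (\<lambda>k. ivec \<delta> k - \<delta>E k)" using sum by (auto simp: fun_eq_iff)
    then have "fv b \<delta>K j = fv b (ivec \<delta>) j - fv b \<delta>E j" using fv_diff by metis
    then show ?thesis using qspanE_orth[OF S dEq j] by (simp add: fv_ivec)
  qed
  have "bK3 \<delta>K \<delta>K = qf (fv b \<delta>K)" using qspanK[OF S dKq] emb_norm[OF Kb] by metis
  also have "\<dots> = of_int (qf (fv b \<delta>))" unfolding qf_def using f by simp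
  finally show ?thesis using neg by simp
qed


definition gspan :: "(nat \<Rightarrow> int) set \<Rightarrow> (nat \<Rightarrow> 'a::comm_ring_1) set" where
  "gspan S = {(\<lambda>k. \<Sum>i<n. c i * of_int (w i k)) | (n::nat) c w. \<forall>i<n. w i \<in> S}"

lemma gspanI: "\<forall>i<(n::nat). w i \<in> S \<Longrightarrow> (\<lambda>k. \<Sum>i<n. c i * of_int (w i k)) \<in> gspan S"
  unfolding gspan_def apply (rule CollectI) apply (rule exI[of _ n]) apply (rule exI[of _ c]) apply (rule exI[of _ w]) by simp

lemma rspan_gspan: "rspan S = gspan S"
  unfolding rspan_def gspan_def ..
lemma cx_span_gspan: "cx_span S = gspan S"
  unfolding cx_span_def gspan_def ..

lemma sum_split_add: "(\<Sum>i<(n::nat)+(m::nat). f i) = (\<Sum>i<n. f i) + (\<Sum>i<m. f (i + n) :: 'a::comm_monoid_add)"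
  by (induct m) (simp_all add: add.commute add.left_commute)

lemma gspan_add: assumes "u \<in> gspan S" "v \<in> gspan S" shows "(\<lambda>k. u k + v k) \<in> gspan S"
proof -
  obtain n :: nat and c w where u: "u = (\<lambda>k. \<Sum>i<n. c i * of_int (w i k))" "\<forall>i<n. w i \<in> S"
    using assms(1) unfolding gspan_def by auto
  obtain m :: nat and c' w' where v: "v = (\<lambda>k. \<Sum>i<m. c' i * of_int (w' i k))" "\<forall>i<m. w' i \<in> S"
    using assms(2) unfolding gspan_def by auto
  define C where "C i = (if i < n then c i else c' (i - n))" for i
  define W where "W i = (if i < n then w i else w' (i - n))" for i
  have "(\<lambda>k. u k + v k) = (\<lambda>k. \<Sum>i<n+m. C i * of_int (W i k))"
    unfolding sum_split_add u v C_def W_def by simp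
  moreover have "\<forall>i<n+m. W i \<in> S" using u(2) v(2) unfolding W_def by auto
  ultimately show ?thesis by (simp add: gspanI)
qed

lemma gspan_scale: assumes "u \<in> gspan S" shows "(\<lambda>k. a * u k) \<in> gspan S"
proof -
  obtain n :: nat and c w where u: "u = (\<lambda>k. \<Sum>i<n. c i * of_int (w i k))" "\<forall>i<n. w i \<in> S"
    using assms(1) unfolding gspan_def by auto
  have "(\<lambda>k. a * u k) = (\<lambda>k. \<Sum>i<n. (a * c i) * of_int (w i k))"
    unfolding u by (simp add: sum_distrib_left mult.assoc)
  then show ?thesis using u(2) by (simp add: gspanI)
qed

lemma gspan_mono: "S \<subseteq> T \<Longrightarrow> gspan S \<subseteq> gspan T"
  unfolding gspan_def by blast

lemma gspan_of_real: assumes "u \<in> gspan S" shows "(\<lambda>k. complex_of_real (u k)) \<in> gspan S"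
proof -
  obtain n :: nat and c w where u: "u = (\<lambda>k. \<Sum>i<n. c i * of_int (w i k))" "\<forall>i<n. w i \<in> S"
    using assms(1) unfolding gspan_def by auto
  have "(\<lambda>k. complex_of_real (u k)) = (\<lambda>k. \<Sum>i<n. complex_of_real (c i) * of_int (w i k))"
    unfolding u by simp
  then show ?thesis using u(2) by (simp add: gspanI)
qed

lemma gspan_Re: assumes "u \<in> gspan S" shows "(\<lambda>k. Re (u k)) \<in> gspan S"
proof -
  obtain n :: nat and c w where u: "u = (\<lambda>k. \<Sum>i<n. c i * of_int (w i k))" "\<forall>i<n. w i \<in> S"
    using assms(1) unfolding gspan_def by auto
  have "(\<lambda>k. Re (u k)) = (\<lambda>k. \<Sum>i<n. Re (c i) * of_int (w i k))"
    unfolding u by simp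
  then show ?thesis using u(2) by (simp add: gspanI)
qed

lemma gspan_Im: assumes "u \<in> gspan S" shows "(\<lambda>k. Im (u k)) \<in> gspan S"
proof -
  obtain n :: nat and c w where u: "u = (\<lambda>k. \<Sum>i<n. c i * of_int (w i k))" "\<forall>i<n. w i \<in> S"
    using assms(1) unfolding gspan_def by auto
  have "(\<lambda>k. Im (u k)) = (\<lambda>k. \<Sum>i<n. Im (c i) * of_int (w i k))"
    unfolding u by simp
  then show ?thesis using u(2) by (simp add: gspanI)
qed

lemma gspan_embK: assumes "Kbasis b" "K = lat_span 4 b" shows "embK b g \<in> gspan K"
proof -
  have "embK b g = (\<lambda>k. \<Sum>i<4. pK g i * of_int (b i k))" unfolding embK_def lc_def ivec_def ..
  moreover have "\<forall>i<4. b i \<in> K" using latspan_basis[of _ 4 b] assms(2) by auto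
  ultimately show ?thesis by (simp add: gspanI)
qed

definition cx :: "(nat \<Rightarrow> real) \<Rightarrow> (nat \<Rightarrow> real) \<Rightarrow> nat \<Rightarrow> complex" where
  "cx u v = (\<lambda>k. complex_of_real (u k) + \<i> * complex_of_real (v k))"

lemma bil_cx: "bil n G (cx u v) (cx u' v') =
   complex_of_real (bil n G u u' - bil n G v v') + \<i> * complex_of_real (bil n G u v' + bil n G v u')"
  unfolding cx_def bil_add1 bil_add2 bil_scale1 bil_scale2 bil_of_real
  by (simp add: algebra_simps)

lemma cnj_cx: "(\<lambda>k. cnj (cx u v k)) = cx u (\<lambda>k. - v k)"
  unfolding cx_def by (simp add: fun_eq_iff)

lemma ivec_cx: "(ivec d :: nat \<Rightarrow> complex) = cx (ivec d) (\<lambda>k. 0)"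
  unfolding cx_def ivec_def by simp

lemma bil_cx_real: "bil n G (cx u v) (cx w (\<lambda>k. 0)) = complex_of_real (bil n G u w) + \<i> * complex_of_real (bil n G v w)"
  unfolding bil_cx by (simp add: bil_zero2)

lemma cx_eq0: "complex_of_real a + \<i> * complex_of_real b = 0 \<longleftrightarrow> a = 0 \<and> b = 0"
  by (simp add: complex_eq_iff)

lemma cx_gspan: "u \<in> gspan S \<Longrightarrow> v \<in> gspan S \<Longrightarrow> cx u v \<in> gspan S"
  unfolding cx_def by (intro gspan_add gspan_scale gspan_of_real)

lemma gspan_lin2: "u \<in> gspan S \<Longrightarrow> v \<in> gspan S \<Longrightarrow> (\<lambda>k. a * u k + c * v k) \<in> gspan S"
  by (intro gspan_add gspan_scale)


lemma frame_pos:
  fixes s P11 P12 P22 W11 W12 W22 t :: real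
  assumes s: "s > 0" and e1: "P11 + W11 = s" and e2: "P22 + W22 = s" and e3: "P12 + W12 = 0"
    and W: "\<And>\<alpha> \<beta>. W11 * \<alpha>^2 + 2 * W12 * \<alpha> * \<beta> + W22 * \<beta>^2 \<le> 0"
    and t: "0 \<le> t" "t \<le> 1"
  shows "P11 + t^2 * W11 > 0" "(P11 + t^2 * W11) * (P22 + t^2 * W22) - (P12 + t^2 * W12)^2 > 0"
proof -
  define u where "u = t^2"
  have u: "0 \<le> u" "u \<le> 1" unfolding u_def using t by (auto simp: power_le_one)
  define A where "A = P11 + u * W11"
  define C where "C = P12 + u * W12"
  define D where "D = P22 + u * W22"
  have W11: "W11 \<le> 0" using W[of 1 0] by simp
  have "A = s - (1 - u) * W11" unfolding A_def using e1 by (simp add: algebra_simps)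
  moreover have "(1 - u) * W11 \<le> 0" using u W11 by (simp add: mult_nonneg_nonpos)
  ultimately have A: "A \<ge> s" by simp
  then show "P11 + t^2 * W11 > 0" using s unfolding A_def u_def by simp
  have key: "A * (A * D - C^2) = s * (C^2 + A^2) - (1 - u) * (W11 * C^2 + 2 * W12 * C * (- A) + W22 * (-A)^2)"
  proof -
    have p: "P11 = s - W11" "P12 = - W12" "P22 = s - W22" using e1 e2 e3 by linarith+
    show ?thesis unfolding A_def C_def D_def p by (simp add: power2_eq_square algebra_simps)
  qed
  have "(1 - u) * (W11 * C^2 + 2 * W12 * C * (- A) + W22 * (-A)^2) \<le> 0"
    using u W[of C "-A"] by (simp add: mult_nonneg_nonpos)
  moreover have "s * (C^2 + A^2) > 0" using s A by (intro mult_pos_pos) (auto simp: add_nonneg_pos)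
  ultimately have "A * (A * D - C^2) > 0" using key by linarith
  then have "A * D - C^2 > 0" using A s by (simp add: zero_less_mult_iff)
  then show "(P11 + t^2 * W11) * (P22 + t^2 * W22) - (P12 + t^2 * W12)^2 > 0"
    unfolding A_def C_def D_def u_def .
qed

lemma sig22:
  fixes P Q g :: "nat \<Rightarrow> real"
  assumes sP: "qf P > 0" and sQ: "qf Q = qf P" and PQ: "Bf P Q = 0" and Pg: "Bf P g = 0" and Qg: "Bf Q g = 0"
    and g: "qf g \<ge> 0"
  shows "g 0 = 0 \<and> g 1 = 0 \<and> g 2 = 0 \<and> g 3 = 0"
proof -
  define s where "s = qf P"
  define p1 where "p1 = P 0 + P 1"
  define p2 where "p2 = P 2 + P 3"
  define q1 where "q1 = Q 0 + Q 1"
  define q2 where "q2 = Q 2 + Q 3"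
  have s: "s > 0" using sP s_def by simp
  have ineq: "(\<alpha> * p1 + \<beta> * q1)^2 + (\<alpha> * p2 + \<beta> * q2)^2 \<ge> 4 * s * (\<alpha>^2 + \<beta>^2)" for \<alpha> \<beta>
  proof -
    have id: "(\<alpha> * p1 + \<beta> * q1)^2 + (\<alpha> * p2 + \<beta> * q2)^2 - 4 * (\<alpha>^2 * qf P + 2 * \<alpha> * \<beta> * Bf P Q + \<beta>^2 * qf Q)
        = (\<alpha> * (P 0 - P 1) + \<beta> * (Q 0 - Q 1))^2 + (\<alpha> * (P 2 - P 3) + \<beta> * (Q 2 - Q 3))^2"
      unfolding p1_def p2_def q1_def q2_def qf_def Bf_def by (simp add: power2_eq_square algebra_simps)
    have "0 \<le> (\<alpha> * (P 0 - P 1) + \<beta> * (Q 0 - Q 1))^2 + (\<alpha> * (P 2 - P 3) + \<beta> * (Q 2 - Q 3))^2" by simp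
    then show ?thesis using id PQ sQ unfolding s_def by (simp add: algebra_simps)
  qed
  define D where "D = p1 * q2 - p2 * q1"
  have D: "D \<noteq> 0"
  proof
    assume D0: "D = 0"
    have "4 * s * (q2^2 + p2^2) \<le> 0" using ineq[of q2 "-p2"] D0 unfolding D_def
      by (simp add: power2_eq_square algebra_simps)
    then have "q2^2 + p2^2 \<le> 0" using s by (simp add: mult_le_0_iff)
    then have z2: "q2 = 0" "p2 = 0" by (simp_all add: add_nonneg_eq_0_iff sum_power2_le_zero_iff)
    have c1: "q1 * p1 + - p1 * q1 = 0" by simp
    have c2: "q1 * p2 + - p1 * q2 = 0" using D0 unfolding D_def by (simp add: algebra_simps)
    have "4 * s * (q1^2 + (-p1)^2) \<le> 0^2 + 0^2" using ineq[of q1 "-p1"] unfolding c1 c2 .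
    then have "4 * s * (q1^2 + p1^2) \<le> 0" by simp
    then have "q1^2 + p1^2 \<le> 0" using s by (simp add: mult_le_0_iff)
    then have z1: "q1 = 0" "p1 = 0" by (simp_all add: sum_power2_le_zero_iff)
    show False using ineq[of 1 0] z1 z2 s by simp
  qed
  define G1 where "G1 = g 0 + g 1"
  define G2 where "G2 = g 2 + g 3"
  define a0 where "a0 = (G1 * q2 - G2 * q1) / D"
  define b0 where "b0 = (p1 * G2 - p2 * G1) / D"
  have sol1: "a0 * p1 + b0 * q1 = G1"
  proof -
    have "a0 * p1 + b0 * q1 = ((G1 * q2 - G2 * q1) * p1 + (p1 * G2 - p2 * G1) * q1) / D"
      unfolding a0_def b0_def by (simp add: add_divide_distrib)
    also have "(G1 * q2 - G2 * q1) * p1 + (p1 * G2 - p2 * G1) * q1 = G1 * D"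
      unfolding D_def by (simp add: algebra_simps)
    finally show ?thesis using D by simp
  qed
  have sol2: "a0 * p2 + b0 * q2 = G2"
  proof -
    have "a0 * p2 + b0 * q2 = ((G1 * q2 - G2 * q1) * p2 + (p1 * G2 - p2 * G1) * q2) / D"
      unfolding a0_def b0_def by (simp add: add_divide_distrib)
    also have "(G1 * q2 - G2 * q1) * p2 + (p1 * G2 - p2 * G1) * q2 = G2 * D"
      unfolding D_def by (simp add: algebra_simps)
    finally show ?thesis using D by simp
  qed
  define h where "h j = g j - a0 * P j - b0 * Q j" for j
  have hs1: "h 0 + h 1 = 0" using sol1 unfolding h_def G1_def p1_def q1_def by (simp add: algebra_simps)
  have hs2: "h 2 + h 3 = 0" using sol2 unfolding h_def G2_def p2_def q2_def by (simp add: algebra_simps)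
  have id4: "4 * qf h = (h 0 + h 1)^2 + (h 2 + h 3)^2 - (h 0 - h 1)^2 - (h 2 - h 3)^2"
    unfolding qf_def by (simp add: power2_eq_square algebra_simps)
  have qh: "qf h = qf g - 2 * a0 * Bf P g - 2 * b0 * Bf Q g + a0^2 * qf P + 2 * a0 * b0 * Bf P Q + b0^2 * qf Q"
    unfolding h_def qf_def Bf_def by (simp add: power2_eq_square field_simps)
  then have qh2: "qf h = qf g + (a0^2 + b0^2) * s" using Pg Qg PQ sQ unfolding s_def by (simp add: algebra_simps)
  have "4 * qf h = - ((h 0 - h 1)^2 + (h 2 - h 3)^2)" using id4 hs1 hs2 by simp
  moreover have "0 \<le> (h 0 - h 1)^2 + (h 2 - h 3)^2" by simp
  ultimately have le: "qf h \<le> 0" by linarith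
  have "(a0^2 + b0^2) * s \<ge> 0" using s by simp
  then have "qf h = 0" "(a0^2 + b0^2) * s = 0" using le qh2 g by linarith+
  then have ab: "a0 = 0" "b0 = 0" using s by (simp_all add: sum_power2_eq_zero_iff)
  have "(h 0 - h 1)^2 + (h 2 - h 3)^2 = 0"
  proof -
    have "4 * qf h = - ((h 0 - h 1)^2 + (h 2 - h 3)^2)" using id4 hs1 hs2 by simp
    then show ?thesis using \<open>qf h = 0\<close> by linarith
  qed
  then have "h 0 - h 1 = 0" "h 2 - h 3 = 0" by (simp_all add: sum_power2_eq_zero_iff)
  moreover have "h j = g j" for j unfolding h_def ab by simp
  ultimately show ?thesis using hs1 hs2 by auto
qed


lemma phi_rspan: assumes S: "Setup b bE bL K Lam" and v: "(v :: nat \<Rightarrow> real) \<in> gspan Lam"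
  shows "\<exists>R. phi b v = lc8 bE R"
proof -
  obtain n :: nat and c w where v: "v = (\<lambda>k. \<Sum>i<n. c i * of_int (w i k))" "\<forall>i<n. w i \<in> Lam"
    using v unfolding gspan_def by auto
  have "\<forall>i\<in>{..<n}. \<exists>R. phi b (ivec (w i)) = (lc8 bE R :: nat \<Rightarrow> real)"
    using phi_Lam[OF S] v(2) by auto
  then obtain R where R: "\<forall>i\<in>{..<n}. phi b (ivec (w i)) = (lc8 bE (R i) :: nat \<Rightarrow> real)"
    by metis
  have "phi b v = (\<lambda>k. \<Sum>i<n. c i * phi b (ivec (w i)) k)"
    unfolding v(1) using phi_sum[of "{..<n}" b c "\<lambda>i. ivec (w i)"] by (simp add: ivec_def)
  also have "\<dots> = (\<lambda>k. \<Sum>i<n. c i * lc8 bE (R i) k)" using R by simp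
  also have "\<dots> = lc8 bE (\<lambda>l. \<Sum>i<n. c i * R i l)"
    unfolding lc8_sum by (simp add: lc8_scale)
  finally show ?thesis by blast
qed

lemma Bf_cong: "(\<And>j. j < 4 \<Longrightarrow> h j = h' j) \<Longrightarrow> Bf g h = Bf g h'"
  unfolding Bf_def by simp

lemma emb_bil: "Kbasis b \<Longrightarrow> bK3 (embK b P) (embK b Q) = Bf P (Q :: nat \<Rightarrow> 'a::field_char_0)"
  unfolding emb_pair by (rule Bf_cong) (simp add: fv_emb)

lemma lc8_add: "lc8 b (\<lambda>i. c i + d i) = (\<lambda>k. lc8 b c k + lc8 b d k)"
  unfolding lc8_def by (simp add: algebra_simps sum.distrib)

lemma bK3_lin_norm: "bK3 (\<lambda>k. \<alpha> * u k + \<beta> * v k) (\<lambda>k. \<alpha> * u k + \<beta> * v k)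
   = \<alpha>^2 * bK3 u u + 2 * \<alpha> * \<beta> * bK3 u v + \<beta>^2 * bK3 v (v :: nat \<Rightarrow> real)"
  by (simp add: bil_add1 bil_add2 bil_scale1 bil_scale2 bK3_sym[of v u] power2_eq_square algebra_simps)

lemma bK3_sum_norm: "bK3 (\<lambda>k. u k + v k) (\<lambda>k. u k + v k) = bK3 u u + 2 * bK3 u v + bK3 v (v :: nat \<Rightarrow> real)"
  by (simp add: bil_add1 bil_add2 bK3_sym[of v u])

lemma bK3_sum_pair: "bK3 (\<lambda>k. u k + v k) (\<lambda>k. u' k + v' k) = bK3 u u' + bK3 u v' + bK3 v u' + bK3 v (v' :: nat \<Rightarrow> real)"
  by (simp add: bil_add1 bil_add2)

lemma gs_props:
  fixes X Y :: "nat \<Rightarrow> real"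
  assumes A: "bK3 X X > 0" and AD: "bK3 X X * bK3 Y Y - (bK3 X Y)^2 > 0"
  defines "Z \<equiv> (\<lambda>k. (bK3 X X / sqrt (bK3 X X * bK3 Y Y - (bK3 X Y)^2)) * (Y k - (bK3 X Y / bK3 X X) * X k))"
  shows "bK3 Z Z = bK3 X X" "bK3 X Z = 0"
proof -
  define a where "a = bK3 X X"
  define c where "c = bK3 X Y"
  define d where "d = bK3 Y Y"
  define l where "l = a / sqrt (a * d - c^2)"
  have a: "a > 0" and ad: "a * d - c^2 > 0" using A AD unfolding a_def c_def d_def by auto
  define m where "m = c / a"
  have Zd: "Z = (\<lambda>k. l * (Y k - m * X k))" unfolding Z_def l_def a_def c_def d_def m_def ..
  have l2: "l^2 = a^2 / (a * d - c^2)" unfolding l_def using ad by (simp add: power_divide)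
  have e1: "bK3 Z Z = l * l * bK3 (\<lambda>k. Y k - m * X k) (\<lambda>k. Y k - m * X k)"
    unfolding Zd bil_scale1 bil_scale2 by simp
  have e2: "bK3 (\<lambda>k. Y k - m * X k) (\<lambda>k. Y k - m * X k) = d - 2 * m * c + m^2 * a"
    unfolding bil_diff1 bil_diff2 bil_scale1 bil_scale2 a_def c_def d_def using bK3_sym[of Y X]
    by (simp add: power2_eq_square algebra_simps)
  have "bK3 Z Z = l^2 * (d - 2 * m * c + m^2 * a)" unfolding e1 e2 by (simp add: power2_eq_square)
  also have "\<dots> = a" unfolding l2 m_def using a ad by (simp add: field_simps power2_eq_square)
  finally show "bK3 Z Z = bK3 X X" unfolding a_def .
  have "bK3 X Z = l * (c - m * a)"
    unfolding Zd bil_scale2 bil_diff2 by (simp add: a_def c_def)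
  also have "\<dots> = 0" using a unfolding m_def by simp
  finally show "bK3 X Z = 0" .
qed

lemma cone_cx:
  assumes "bK3 X X = A" "bK3 Z Z = A" "bK3 X Z = 0" "A > 0"
  shows "bK3 (cx X Z) (cx X Z) = 0" "Re (bK3 (cx X Z) (\<lambda>k. cnj (cx X Z k))) > 0"
proof -
  show "bK3 (cx X Z) (cx X Z) = 0" unfolding bil_cx using assms bK3_sym[of Z X] by simp
  have "bK3 (cx X Z) (\<lambda>k. cnj (cx X Z k)) = complex_of_real (A + A) + \<i> * complex_of_real (- bK3 X Z + bK3 Z X)"
    unfolding cnj_cx bil_cx using assms by (simp add: bil_neg2)
  then show "Re (bK3 (cx X Z) (\<lambda>k. cnj (cx X Z k))) > 0" using assms by simp
qed

lemma comp_path: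
  fixes g :: "real \<Rightarrow> nat \<Rightarrow> complex"
  assumes "continuous_on {0..1} g" "\<forall>t\<in>{0..1}. g t \<in> S"
  shows "g 0 \<in> connected_component_set S (g 1)"
proof -
  have "connected (g ` {0..1})" by (rule connected_continuous_image[OF assms(1)]) simp
  moreover have "g ` {0..1} \<subseteq> S" using assms(2) by auto
  ultimately show ?thesis unfolding connected_component_def mem_Collect_eq
    by (intro exI[of _ "g ` {0..1}"]) auto
qed


lemma Bf_lin: "Bf g (\<lambda>j. u j + c * v j) = Bf g u + c * Bf g (v :: nat \<Rightarrow> 'a::field_char_0)"
  unfolding Bf_def by (simp add: field_simps)
lemma Bf_scale_l: "Bf (\<lambda>j. c * u j) v = c * Bf u (v :: nat \<Rightarrow> 'a::field_char_0)"
  unfolding Bf_def by (simp add: field_simps)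
lemma Bf_add_l: "Bf (\<lambda>j. u j + w j) v = Bf u v + Bf w (v :: nat \<Rightarrow> 'a::field_char_0)"
  unfolding Bf_def by (simp add: field_simps)
lemma Bf_self: "Bf a a = qf (a :: nat \<Rightarrow> 'a::field_char_0)"
  unfolding Bf_def qf_def by (simp add: field_simps)

lemma stage1:
  fixes a :: "nat \<Rightarrow> real"
  assumes S: "Setup b bE bL K Lam" and qa: "qf a = -1" and w0: "\<omega>0 \<in> period_cone Lam"
  shows "\<exists>P Q. cx (embK b P) (embK b Q) \<in> connected_component_set (period_cone Lam) \<omega>0
     \<and> Bf P a = 0 \<and> Bf Q a = 0 \<and> qf P > 0 \<and> qf Q = qf P \<and> Bf P Q = 0"
proof -
  have Kb: "Kbasis b" and Kd: "K = lat_span 4 b" and KL: "K \<subseteq> Lam" and Eb: "Ebasis bE"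
    using S unfolding Setup_def by auto
  define x where "x = (\<lambda>k. Re (\<omega>0 k))"
  define y where "y = (\<lambda>k. Im (\<omega>0 k))"
  have w0s: "\<omega>0 \<in> gspan Lam" using w0 unfolding period_cone_def cx_span_gspan by auto
  have xL: "x \<in> gspan Lam" unfolding x_def by (rule gspan_Re[OF w0s])
  have yL: "y \<in> gspan Lam" unfolding y_def by (rule gspan_Im[OF w0s])
  have w0cx: "\<omega>0 = cx x y" unfolding cx_def x_def y_def by (simp add: fun_eq_iff complex_eq_iff)
  have "bK3 \<omega>0 \<omega>0 = 0" using w0 unfolding period_cone_def by auto
  then have "bK3 x x - bK3 y y = 0 \<and> bK3 x y + bK3 y x = 0" unfolding w0cx bil_cx cx_eq0 .
  then have xxyy: "bK3 y y = bK3 x x" and xy: "bK3 x y = 0" using bK3_sym[of y x] by auto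
  have "0 < Re (bK3 \<omega>0 (\<lambda>k. cnj (\<omega>0 k)))" using w0 unfolding period_cone_def by auto
  also have "bK3 \<omega>0 (\<lambda>k. cnj (\<omega>0 k)) = complex_of_real (bK3 x x + bK3 y y) + \<i> * complex_of_real (- bK3 x y + bK3 y x)"
    unfolding w0cx cnj_cx bil_cx by (simp add: bil_neg2)
  finally have s0: "bK3 x x > 0" using xxyy by simp
  define s where "s = bK3 x x"
  define gV where "gV v = (\<lambda>j. fv b v j + Bf (fv b v) a * a j)" for v :: "nat \<Rightarrow> real"
  define pV where "pV v = embK b (gV v)" for v
  define wv where "wv v = (\<lambda>k. v k - pV v k)" for v
  have F1: "Bf (gV v) a = 0" for v unfolding gV_def Bf_add_l Bf_scale_l Bf_self qa by simp
  have F2: "fv b (wv v) j = - Bf (fv b v) a * a j" if "j < 4" for v j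
  proof -
    have "fv b (embK b (gV v)) j = gV v j" by (rule fv_emb[OF Kb that])
    then show ?thesis unfolding wv_def fv_diff pV_def by (simp add: gV_def)
  qed
  have F3: "bK3 (pV v) (wv v') = 0" for v v'
  proof -
    have "bK3 (pV v) (wv v') = Bf (gV v) (fv b (wv v'))" unfolding pV_def emb_pair ..
    also have "\<dots> = Bf (gV v) (\<lambda>j. 0 + (- Bf (fv b v') a) * a j)" by (rule Bf_cong) (simp add: F2)
    also have "\<dots> = 0" unfolding Bf_lin F1 by (simp add: Bf_def)
    finally show ?thesis .
  qed
  have F3': "bK3 (wv v') (pV v) = 0" for v v' using F3 bK3_sym by metis
  have F4: "wv v = (\<lambda>k. phi b v k + (- Bf (fv b v) a) * embK b a k)" for v
    unfolding wv_def pV_def phi_def gV_def embK_add embK_scale by (simp add: fun_eq_iff)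
  obtain Rx where Rx: "phi b x = lc8 bE Rx" using phi_rspan[OF S xL] by blast
  obtain Ry where Ry: "phi b y = lc8 bE Ry" using phi_rspan[OF S yL] by blast
  define P11 where "P11 = bK3 (pV x) (pV x)"
  define P12 where "P12 = bK3 (pV x) (pV y)"
  define P22 where "P22 = bK3 (pV y) (pV y)"
  define W11 where "W11 = bK3 (wv x) (wv x)"
  define W12 where "W12 = bK3 (wv x) (wv y)"
  define W22 where "W22 = bK3 (wv y) (wv y)"
  have Wneg: "W11 * \<alpha>^2 + 2 * W12 * \<alpha> * \<beta> + W22 * \<beta>^2 \<le> 0" for \<alpha> \<beta>
  proof -
    define L where "L = (\<lambda>k. \<alpha> * phi b x k + \<beta> * phi b y k)"
    define c where "c = \<alpha> * (- Bf (fv b x) a) + \<beta> * (- Bf (fv b y) a)"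
    have LL: "bK3 L L \<le> 0"
    proof -
      have "L = lc8 bE (\<lambda>l. \<alpha> * Rx l + \<beta> * Ry l)" unfolding L_def Rx Ry lc8_add lc8_scale ..
      then show ?thesis using lc8_nonpos[OF Eb] by simp
    qed
    have EL: "bK3 (embK b a) L = 0"
    proof -
      have "bK3 (embK b a) L = Bf a (fv b L)" unfolding emb_pair ..
      also have "\<dots> = Bf a (\<lambda>j. 0)" by (rule Bf_cong) (simp add: L_def fv_add fv_scale fv_phi[OF Kb])
      finally show ?thesis by (simp add: Bf_def)
    qed
    have EE: "bK3 (embK b a) (embK b a) = -1" using emb_norm[OF Kb, of a] qa by simp
    have comb: "(\<lambda>k. \<alpha> * wv x k + \<beta> * wv y k) = (\<lambda>k. L k + c * embK b a k)"
      unfolding F4 L_def c_def by (simp add: fun_eq_iff algebra_simps)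
    have "bK3 (\<lambda>k. \<alpha> * wv x k + \<beta> * wv y k) (\<lambda>k. \<alpha> * wv x k + \<beta> * wv y k) = bK3 L L - c^2"
      unfolding comb bK3_sum_norm bil_scale1 bil_scale2 using EL EE bK3_sym[of L "embK b a"]
      by (simp add: power2_eq_square)
    then have "W11 * \<alpha>^2 + 2 * W12 * \<alpha> * \<beta> + W22 * \<beta>^2 = bK3 L L - c^2"
      unfolding bK3_lin_norm W11_def W12_def W22_def by (simp add: algebra_simps)
    moreover have "0 \<le> c^2" by simp
    ultimately show ?thesis using LL by linarith
  qed
  have xdec: "x = (\<lambda>k. pV x k + wv x k)" and ydec: "y = (\<lambda>k. pV y k + wv y k)" unfolding wv_def by auto
  have xx': "bK3 (\<lambda>k. pV x k + wv x k) (\<lambda>k. pV x k + wv x k) = bK3 x x" by (simp only: xdec[symmetric])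
  have yy': "bK3 (\<lambda>k. pV y k + wv y k) (\<lambda>k. pV y k + wv y k) = bK3 y y" by (simp only: ydec[symmetric])
  have xy': "bK3 (\<lambda>k. pV x k + wv x k) (\<lambda>k. pV y k + wv y k) = bK3 x y" by (simp only: xdec[symmetric] ydec[symmetric])
  have e1: "P11 + W11 = s" using xx' unfolding s_def P11_def W11_def bK3_sum_norm F3 by simp
  have e2: "P22 + W22 = s" using yy' unfolding s_def P22_def W22_def xxyy bK3_sum_norm F3 by simp
  have e3: "P12 + W12 = 0" using xy' unfolding P12_def W12_def xy bK3_sum_pair F3 F3' by simp
  define A where "A t = P11 + t^2 * W11" for t :: real
  define C where "C t = P12 + t^2 * W12" for t :: real
  define D where "D t = P22 + t^2 * W22" for t :: real
  define X where "X t = (\<lambda>k. pV x k + t * wv x k)" for t :: real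
  define Y where "Y t = (\<lambda>k. pV y k + t * wv y k)" for t :: real
  have XX: "bK3 (X t) (X t) = A t" and XY: "bK3 (X t) (Y t) = C t" and YY: "bK3 (Y t) (Y t) = D t" for t
    unfolding X_def Y_def A_def C_def D_def P11_def P12_def P22_def W11_def W12_def W22_def
    by (simp_all add: bil_add1 bil_add2 bil_scale1 bil_scale2 F3 F3' power2_eq_square)
  have pos: "A t > 0" "A t * D t - (C t)^2 > 0" if "t \<in> {0..1}" for t
    using frame_pos[of s P11 W11 P22 W22 P12 W12 t] s0 e1 e2 e3 Wneg that
    unfolding A_def C_def D_def s_def by auto
  define Z where "Z t = (\<lambda>k. (A t / sqrt (A t * D t - (C t)^2)) * (Y t k - (C t / A t) * X t k))" for t
  define om where "om t = cx (X t) (Z t)" for t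
  have ZZ: "bK3 (Z t) (Z t) = A t" and XZ: "bK3 (X t) (Z t) = 0" if "t \<in> {0..1}" for t
    using gs_props[of "X t" "Y t"] pos[OF that] unfolding XX XY YY Z_def by auto
  have pVL: "pV v \<in> gspan Lam" for v unfolding pV_def using gspan_embK[OF Kb Kd] gspan_mono[OF KL] by blast
  have wxL: "wv x \<in> gspan Lam" and wyL: "wv y \<in> gspan Lam"
    unfolding wv_def using gspan_lin2[OF xL pVL[of x], where a=1 and c="-1"] gspan_lin2[OF yL pVL[of y], where a=1 and c="-1"] by auto
  have XL: "X t \<in> gspan Lam" and YL: "Y t \<in> gspan Lam" for t
    unfolding X_def Y_def using gspan_lin2[OF pVL[of x] wxL, where a=1 and c=t] gspan_lin2[OF pVL[of y] wyL, where a=1 and c=t] by auto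
  have ZL: "Z t \<in> gspan Lam" for t
  proof -
    have "(\<lambda>k. Y t k - (C t / A t) * X t k) \<in> gspan Lam" using gspan_lin2[OF YL[of t] XL[of t], where a=1 and c="- (C t / A t)"] by simp
    then show ?thesis unfolding Z_def by (rule gspan_scale)
  qed
  have incone: "om t \<in> period_cone Lam" if "t \<in> {0..1}" for t
    unfolding period_cone_def om_def cx_span_gspan
    using cx_gspan[OF XL ZL] cone_cx[OF XX ZZ[OF that] XZ[OF that] pos(1)[OF that]] by auto
  have cont: "continuous_on {0..1} om"
  proof -
    have "continuous_on {0..1} (\<lambda>t. om t k)" for k
    proof -
      have nz: "\<forall>t\<in>{0..1}. A t \<noteq> 0" "\<forall>t\<in>{0..1}. sqrt (A t * D t - (C t)^2) \<noteq> 0"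
      proof (safe)
        fix t :: real assume t: "t \<in> {0..1}"
        show False if "A t = 0" using pos(1)[OF t] that by simp
        show False if "sqrt (A t * D t - (C t)^2) = 0" using pos(2)[OF t] that by simp
      qed
      have "continuous_on {0..1} (\<lambda>t. complex_of_real (pV x k + t * wv x k) + \<i> * complex_of_real
          ((P11 + t^2 * W11) / sqrt ((P11 + t^2 * W11) * (P22 + t^2 * W22) - (P12 + t^2 * W12)^2) *
           ((pV y k + t * wv y k) - ((P12 + t^2 * W12) / (P11 + t^2 * W11)) * (pV x k + t * wv x k))))"
        using nz unfolding A_def C_def D_def by (intro continuous_intros) auto
      then show ?thesis unfolding om_def cx_def Z_def X_def Y_def A_def C_def D_def .
    qed
    then show ?thesis by (rule continuous_on_coordinatewise_then_product)
  qed
  have om1: "om 1 = \<omega>0"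
  proof -
    have A1: "A 1 = s" and C1: "C 1 = 0" and D1: "D 1 = s" unfolding A_def C_def D_def using e1 e2 e3 by auto
    have "X 1 = x" unfolding X_def using xdec by simp
    moreover have "Y 1 = y" unfolding Y_def using ydec by simp
    moreover have "s / sqrt (s * s) = 1" using s0 unfolding s_def by (simp add: real_sqrt_mult)
    ultimately have "Z 1 = y" unfolding Z_def A1 C1 D1 by (simp add: power2_eq_square)
    then show ?thesis unfolding om_def w0cx \<open>X 1 = x\<close> by simp
  qed
  have comp: "om 0 \<in> connected_component_set (period_cone Lam) \<omega>0"
    using comp_path[OF cont, of "period_cone Lam"] incone om1 by simp
  define l0 where "l0 = A 0 / sqrt (A 0 * D 0 - (C 0)^2)"
  define m0 where "m0 = C 0 / A 0"
  define P where "P = gV x"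
  define Q where "Q = (\<lambda>j. l0 * (gV y j + (- m0) * gV x j))"
  have X0: "X 0 = embK b P" unfolding X_def P_def pV_def by simp
  have Z0: "Z 0 = embK b Q" unfolding Z_def Q_def embK_scale embK_add X_def Y_def l0_def m0_def pV_def
    by (simp add: fun_eq_iff algebra_simps)
  have t0: "(0::real) \<in> {0..1}" by simp
  show ?thesis
  proof (intro exI conjI)
    show "cx (embK b P) (embK b Q) \<in> connected_component_set (period_cone Lam) \<omega>0"
      using comp unfolding om_def X0 Z0 .
    show "Bf P a = 0" unfolding P_def by (rule F1)
    show "Bf Q a = 0" unfolding Q_def Bf_scale_l Bf_add_l by (simp add: F1 Bf_scale_l)
    show "qf P > 0" using pos(1)[OF t0] XX[of 0] unfolding X0 emb_norm[OF Kb] by simp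
    show "qf Q = qf P" using ZZ[OF t0] XX[of 0] unfolding X0 Z0 emb_norm[OF Kb] by simp
    show "Bf P Q = 0" using XZ[OF t0] unfolding X0 Z0 emb_bil[OF Kb] .
  qed
qed


lemma qf_lin: "qf (\<lambda>j. u j + c * v j) = qf u + 2 * c * Bf u v + c^2 * qf (v :: nat \<Rightarrow> real)"
  unfolding qf_def Bf_def by (simp add: power2_eq_square field_simps)

lemma Bf_sym': "Bf u v = Bf v (u :: nat \<Rightarrow> real)" by (rule Bf_sym)

lemma stage2:
  fixes a e P Q :: "nat \<Rightarrow> real"
  assumes Kb: "Kbasis b" and Kd: "K = lat_span 4 b" and KL: "K \<subseteq> Lam" and qa: "qf a = -1"
    and Pa: "Bf P a = 0" and Qa: "Bf Q a = 0" and sP: "qf P > 0" and sQ: "qf Q = qf P" and PQ: "Bf P Q = 0"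
    and Pe: "Bf P e = 0" and Qe: "Bf Q e = 0"
    and gnz: "\<not> (\<forall>j<4. e j + Bf e a * a j = 0)"
  shows "\<exists>G H. cx (embK b G) (embK b H) \<in> connected_component_set (period_cone Lam) (cx (embK b P) (embK b Q))
     \<and> Bf G a = 0 \<and> Bf H a = 0 \<and> (Bf G e \<noteq> 0 \<or> Bf H e \<noteq> 0)"
proof -
  define c where "c = Bf e a"
  define g where "g = (\<lambda>j. e j + c * a j)"
  have ga: "Bf g a = 0" unfolding g_def Bf_add_l Bf_scale_l Bf_self qa c_def by simp
  have Pg: "Bf P g = 0" unfolding g_def Bf_lin Pe Pa by simp
  have Qg: "Bf Q g = 0" unfolding g_def Bf_lin Qe Qa by simp
  have qg_ne: "qf g < 0"
  proof (rule ccontr)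
    assume "\<not> qf g < 0"
    then have "g 0 = 0 \<and> g 1 = 0 \<and> g 2 = 0 \<and> g 3 = 0" using sig22[OF sP sQ PQ Pg Qg] by simp
    then have "\<forall>j<4. e j + Bf e a * a j = 0" unfolding g_def c_def
      by (auto simp: less_Suc_eq numeral_eq_Suc)
    then show False using gnz by simp
  qed
  have ge: "Bf g e = qf g"
  proof -
    have "Bf g e = qf e + c * c" unfolding g_def Bf_add_l Bf_scale_l Bf_self c_def using Bf_sym'[of a e] by simp
    moreover have "qf g = qf e + c * c" unfolding g_def qf_lin qa c_def by (simp add: power2_eq_square)
    ultimately show ?thesis by simp
  qed
  define \<sigma> where "\<sigma> = sqrt (qf P / (-2 * qf g))"
  have \<sigma>: "\<sigma> > 0" unfolding \<sigma>_def using sP qg_ne by (simp add: divide_pos_neg)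
  have \<sigma>2: "\<sigma>^2 * qf g = - qf P / 2" unfolding \<sigma>_def using sP qg_ne by (simp add: field_simps)
  define G where "G \<tau> = (\<lambda>j. P j + (\<tau> * \<sigma>) * g j)" for \<tau> :: real
  define \<rho> where "\<rho> \<tau> = sqrt ((qf P + (\<tau> * \<sigma>)^2 * qf g) / qf Q)" for \<tau> :: real
  define H where "H \<tau> = (\<lambda>j. \<rho> \<tau> * Q j)" for \<tau> :: real
  define om where "om \<tau> = cx (embK b (G \<tau>)) (embK b (H \<tau>))" for \<tau>
  have qG: "qf (G \<tau>) = qf P + (\<tau> * \<sigma>)^2 * qf g" for \<tau> unfolding G_def qf_lin Pg by simp
  have qGpos: "qf (G \<tau>) > 0" if "\<tau> \<in> {0..1}" for \<tau>
  proof -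
    have "\<tau>^2 \<le> 1" using that by (simp add: power_le_one)
    then have "\<tau>^2 * (\<sigma>^2 * qf g) \<ge> 1 * (\<sigma>^2 * qf g)" using qg_ne
      by (intro mult_right_mono_neg) (auto simp: mult_nonneg_nonpos)
    then have "(\<tau> * \<sigma>)^2 * qf g \<ge> - qf P / 2" using \<sigma>2 by (simp add: power_mult_distrib algebra_simps)
    then show ?thesis unfolding qG using sP by linarith
  qed
  have cone: "om \<tau> \<in> period_cone Lam" if "\<tau> \<in> {0..1}" for \<tau>
  proof -
    have r2: "(\<rho> \<tau>)^2 * qf Q = qf (G \<tau>)" unfolding \<rho>_def using qGpos[OF that] sP sQ qG by simp
    have XX: "bK3 (embK b (G \<tau>)) (embK b (G \<tau>)) = qf (G \<tau>)" by (rule emb_norm[OF Kb])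
    have ZZ: "bK3 (embK b (H \<tau>)) (embK b (H \<tau>)) = qf (G \<tau>)"
      unfolding emb_norm[OF Kb] H_def using r2 by (simp add: qf_def power2_eq_square algebra_simps)
    have XZ: "bK3 (embK b (G \<tau>)) (embK b (H \<tau>)) = 0"
      unfolding emb_bil[OF Kb] H_def G_def Bf_sym'[of _ "\<lambda>j. \<rho> \<tau> * Q j"] Bf_scale_l Bf_add_l
      using PQ Qg Bf_sym'[of Q P] Bf_sym'[of Q g] by (simp add: Bf_scale_l Bf_lin)
    have "om \<tau> \<in> gspan Lam" unfolding om_def using gspan_embK[OF Kb Kd] gspan_mono[OF KL]
      by (intro cx_gspan) blast+
    then show ?thesis unfolding period_cone_def cx_span_gspan om_def
      using cone_cx[OF XX ZZ XZ qGpos[OF that]] by (auto simp: om_def)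
  qed
  have cont: "continuous_on {0..1} om"
  proof -
    have "continuous_on {0..1} (\<lambda>\<tau>. om \<tau> k)" for k
    proof -
      have "continuous_on {0..1} (\<lambda>\<tau>. complex_of_real (embK b P k + (\<tau> * \<sigma>) * embK b g k) +
          \<i> * complex_of_real (sqrt ((qf P + (\<tau> * \<sigma>)^2 * qf g) / qf Q) * embK b Q k))"
        using sP sQ by (intro continuous_intros) auto
      moreover have "om \<tau> k = complex_of_real (embK b P k + (\<tau> * \<sigma>) * embK b g k) +
          \<i> * complex_of_real (sqrt ((qf P + (\<tau> * \<sigma>)^2 * qf g) / qf Q) * embK b Q k)" for \<tau>
        unfolding om_def cx_def G_def H_def \<rho>_def embK_add embK_scale by simp
      ultimately show ?thesis by simp
    qed
    then show ?thesis by (rule continuous_on_coordinatewise_then_product)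
  qed
  have om0: "om 0 = cx (embK b P) (embK b Q)"
  proof -
    have "G 0 = P" unfolding G_def by simp
    moreover have "H 0 = Q" unfolding H_def \<rho>_def using sQ sP by simp
    ultimately show ?thesis unfolding om_def by simp
  qed
  have "connected_component (period_cone Lam) (om 1) (om 0)"
    using comp_path[OF cont, of "period_cone Lam"] cone by simp
  then have comp: "om 1 \<in> connected_component_set (period_cone Lam) (cx (embK b P) (embK b Q))"
    unfolding om0[symmetric] using connected_component_sym by fastforce
  show ?thesis
  proof (intro exI conjI)
    show "cx (embK b (G 1)) (embK b (H 1)) \<in> connected_component_set (period_cone Lam) (cx (embK b P) (embK b Q))"
      using comp unfolding om_def .
    show "Bf (G 1) a = 0" unfolding G_def Bf_add_l Bf_scale_l Pa ga by simp
    show "Bf (H 1) a = 0" unfolding H_def Bf_scale_l Qa by simp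
    have "Bf (G 1) e = \<sigma> * qf g" unfolding G_def Bf_add_l Bf_scale_l Pe ge by simp
    then show "Bf (G 1) e \<noteq> 0 \<or> Bf (H 1) e \<noteq> 0" using \<sigma> qg_ne by simp
  qed
qed


lemma pairing: "bK3 (cx (embK b G) (embK b H)) (ivec v :: nat \<Rightarrow> complex)
   = complex_of_real (Bf G (fv b (ivec v))) + \<i> * complex_of_real (Bf H (fv b (ivec v)))"
  unfolding ivec_cx bil_cx_real emb_pair ..

lemma hyperplane:
  assumes S: "Setup b bE bL K Lam" and w0: "\<omega>0 \<in> period_cone Lam"
    and qa: "qf (fv b (ivec \<delta>) :: nat \<Rightarrow> real) = -1"
    and heq: "hyp d \<inter> (connected_component_set (period_cone Lam) \<omega>0 \<inter> cx_span K)
           = hyp \<delta> \<inter> (connected_component_set (period_cone Lam) \<omega>0 \<inter> cx_span K)"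
  shows "\<forall>j<4. fv b (ivec d) j + Bf (fv b (ivec d)) (fv b (ivec \<delta>)) * fv b (ivec \<delta>) j = (0::real)"
proof (rule ccontr)
  assume gnz: "\<not> (\<forall>j<4. fv b (ivec d) j + Bf (fv b (ivec d)) (fv b (ivec \<delta>)) * fv b (ivec \<delta>) j = (0::real))"
  have Kb: "Kbasis b" and Kd: "K = lat_span 4 b" and KL: "K \<subseteq> Lam" using S unfolding Setup_def by auto
  define a where "a = (fv b (ivec \<delta>) :: nat \<Rightarrow> real)"
  define e where "e = (fv b (ivec d) :: nat \<Rightarrow> real)"
  define CC where "CC = connected_component_set (period_cone Lam) \<omega>0"
  have key: False if inC: "cx (embK b G) (embK b H) \<in> CC" and Ga: "Bf G a = 0" and Ha: "Bf H a = 0"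
     and Ge: "Bf G e \<noteq> 0 \<or> Bf H e \<noteq> 0" for G H
  proof -
    let ?w = "cx (embK b G) (embK b H)"
    have wK: "?w \<in> cx_span K" unfolding cx_span_gspan by (intro cx_gspan gspan_embK[OF Kb Kd])
    have "?w \<in> hyp \<delta>" using Ga Ha unfolding a_def by (simp add: hyp_def pairing)
    then have "?w \<in> hyp d" using heq inC wK unfolding CC_def by blast
    then show False using Ge unfolding e_def by (simp add: hyp_def pairing cx_eq0)
  qed
  obtain P Q where PQ: "cx (embK b P) (embK b Q) \<in> CC" "Bf P a = 0" "Bf Q a = 0" "qf P > 0" "qf Q = qf P" "Bf P Q = 0"
    using stage1[OF S qa[folded a_def] w0] unfolding CC_def by blast
  show False
  proof (cases "Bf P e = 0 \<and> Bf Q e = 0")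
    case False
    then show False using key[OF PQ(1) PQ(2) PQ(3)] by blast
  next
    case True
    obtain G H where GH: "cx (embK b G) (embK b H) \<in> connected_component_set (period_cone Lam) (cx (embK b P) (embK b Q))"
       "Bf G a = 0" "Bf H a = 0" "Bf G e \<noteq> 0 \<or> Bf H e \<noteq> 0"
      using stage2[OF Kb Kd KL qa[folded a_def] PQ(2-6) conjunct1[OF True] conjunct2[OF True]] gnz
      unfolding a_def e_def by blast
    have "connected_component_set (period_cone Lam) (cx (embK b P) (embK b Q)) = CC"
      unfolding CC_def by (rule connected_component_eq) (use PQ(1) CC_def in simp)
    then show False using key[OF _ GH(2-4)] GH(1) by simp
  qed
qed


lemma norm_split: assumes Kb: "Kbasis b"
  shows "bK3 v v = qf (fv b v) + bK3 (phi b v) (phi b (v :: nat \<Rightarrow> real))"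
proof -
  have vd: "v = (\<lambda>k. embK b (fv b v) k + phi b v k)" unfolding phi_def by simp
  have cross: "bK3 (embK b (fv b v)) (phi b v) = 0"
  proof -
    have "bK3 (embK b (fv b v)) (phi b v) = Bf (fv b v) (fv b (phi b v))" unfolding emb_pair ..
    also have "\<dots> = Bf (fv b v) (\<lambda>j. 0)" by (rule Bf_cong) (simp add: fv_phi[OF Kb])
    finally show ?thesis by (simp add: Bf_def)
  qed
  have "bK3 v v = bK3 (\<lambda>k. embK b (fv b v) k + phi b v k) (\<lambda>k. embK b (fv b v) k + phi b v k)"
    by (simp only: vd[symmetric])
  also have "\<dots> = qf (fv b v) + bK3 (phi b v) (phi b v)"
    unfolding bK3_sum_norm cross emb_norm[OF Kb] by simp
  finally show ?thesis .
qed

lemma ivec_rspan: "v \<in> Lam \<Longrightarrow> (ivec v :: nat \<Rightarrow> real) \<in> rspan Lam"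
proof -
  assume v: "v \<in> Lam"
  have "(ivec v :: nat \<Rightarrow> real) = (\<lambda>k. \<Sum>i<(1::nat). 1 * of_int ((\<lambda>_. v) i k))" unfolding ivec_def by simp
  then show ?thesis unfolding rspan_gspan using gspanI[of 1 "\<lambda>_. v" Lam "\<lambda>_. 1 :: real"] v by simp
qed

lemma qf_of_int: "qf (\<lambda>j. (of_int (f j) :: 'a::comm_ring_1)) = of_int (qf f)"
  unfolding qf_def by simp

lemma norm_Lam: assumes S: "Setup b bE bL K Lam" and v: "v \<in> Lam"
  shows "real_of_int (bK3 v v) = real_of_int (qf (fv b v)) + bK3 (phi b (ivec v)) (phi b (ivec v))"
    "bK3 (phi b (ivec v)) (phi b (ivec v :: nat \<Rightarrow> real)) \<le> 0"
proof -
  have Kb: "Kbasis b" using S unfolding Setup_def by auto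
  have "real_of_int (bK3 v v) = bK3 (ivec v) (ivec v :: nat \<Rightarrow> real)" by (simp add: bil_ivec)
  also have "\<dots> = qf (fv b (ivec v :: nat \<Rightarrow> real)) + bK3 (phi b (ivec v)) (phi b (ivec v))" by (rule norm_split[OF Kb])
  also have "qf (fv b (ivec v :: nat \<Rightarrow> real)) = real_of_int (qf (fv b v))"
    using qf_of_int[of "fv b v"] by (simp add: fv_ivec[abs_def])
  finally show "real_of_int (bK3 v v) = real_of_int (qf (fv b v)) + bK3 (phi b (ivec v)) (phi b (ivec v))" .
  show "bK3 (phi b (ivec v)) (phi b (ivec v :: nat \<Rightarrow> real)) \<le> 0" by (rule lemmaL[OF S ivec_rspan[OF v]])
qed

lemma embK_cong: "(\<And>j. j < 4 \<Longrightarrow> g j = h j) \<Longrightarrow> embK b g = embK b h"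
  unfolding embK_def lc_def pK_def by (intro ext sum.cong) auto

lemma I_lemma:
  assumes S: "Setup b bE bL K Lam" and Imu: "isometry_K3 I"
      "{x \<in> zvec 22. I x = - x} = K"
      "{x \<in> zvec 22. I x = x} = {x \<in> zvec 22. \<forall>y\<in>K. bK3 x y = 0}"
    and dl: "\<delta> \<in> Lam"
  shows "(ivec (I \<delta>) :: nat \<Rightarrow> real) = (\<lambda>k. - embK b (fv b (ivec \<delta>)) k + phi b (ivec \<delta>) k)"
proof -
  have Kb: "Kbasis b" and Kd: "K = lat_span 4 b" and Ld: "Lam = lat_span 12 bL"
    and Lz: "\<forall>i<12. bL i \<in> zvec 22" and KL: "K \<subseteq> Lam"
    using S unfolding Setup_def by auto
  have bz: "\<forall>i<4. b i \<in> zvec 22" using Kb unfolding Kbasis_def by auto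
  define d2 where "d2 = (\<lambda>k. 2 * \<delta> k)"
  have d2L: "d2 \<in> Lam" unfolding d2_def using latspan_scale dl Ld by blast
  have ev: "\<forall>j<4. even (fv b d2 j)" unfolding d2_def using fv_scale[of b 2 \<delta>] by simp
  obtain z where z: "z \<in> orth_in Lam K" "(\<lambda>k. ivec d2 k - embK b (fv b (ivec d2)) k) = (ivec z :: nat \<Rightarrow> real)"
    using Lam_split[OF Kb Kd Ld KL Lz d2L ev] by blast
  define a where "a = fv b \<delta>"
  define c where "c i = (if i = 0 then a 1 else if i = 1 then a 0 else if i = 2 then a 3 else a 2)" for i :: nat
  define kk where "kk = (\<lambda>k. \<Sum>i<4. c i * b i k)"
  have kkK: "kk \<in> K" unfolding kk_def Kd lat_span_def by auto
  have emb2: "embK b (fv b (ivec d2)) = (ivec kk :: nat \<Rightarrow> real)"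
  proof -
    have "pK (fv b (ivec d2 :: nat \<Rightarrow> real)) i = of_int (c i)" if "i < 4" for i
    proof -
      have f: "fv b (ivec d2 :: nat \<Rightarrow> real) j = 2 * of_int (a j)" for j
        unfolding fv_ivec d2_def fv_scale a_def by simp
      have "i = 0 \<or> i = 1 \<or> i = 2 \<or> i = 3" using that by auto
      then show ?thesis unfolding pK_def f c_def by auto
    qed
    then show ?thesis unfolding embK_def lc_def kk_def ivec_def by (intro ext sum.cong) auto
  qed
  have d2eq: "d2 = kk + z"
  proof -
    have h: "(ivec d2 k :: real) = ivec kk k + ivec z k" for k
      using fun_cong[OF z(2), of k] emb2 by (simp add: algebra_simps)
    have "(ivec d2 :: nat \<Rightarrow> real) = ivec (kk + z)" using h by (simp add: fun_eq_iff ivec_def)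
    then show ?thesis by (rule ivec_inj)
  qed
  have kkz: "kk \<in> zvec 22" using latspan_zvec[OF bz] kkK Kd by simp
  have zz: "z \<in> zvec 22" using latspan_zvec[OF Lz] z(1) Ld unfolding orth_in_def by auto
  have dz: "\<delta> \<in> zvec 22" using latspan_zvec[OF Lz] dl Ld by simp
  have Ikk: "I kk = - kk" using Imu(2) kkK kkz by blast
  have Iz: "I z = z" using Imu(3) zz z(1) unfolding orth_in_def by blast
  have add: "\<forall>x\<in>zvec 22. \<forall>y\<in>zvec 22. I (x + y) = I x + I y" using Imu(1) unfolding isometry_K3_def by blast
  have "I d2 = - kk + z" unfolding d2eq using add kkz zz Ikk Iz by simp
  moreover have "I d2 = I \<delta> + I \<delta>"
  proof -
    have "d2 = \<delta> + \<delta>" unfolding d2_def by (simp add: fun_eq_iff)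
    moreover have "I (\<delta> + \<delta>) = I \<delta> + I \<delta>" using add dz by blast
    ultimately show ?thesis by (simp only:)
  qed
  ultimately have II: "I \<delta> + I \<delta> = - kk + z" by simp
  have "(ivec (I \<delta>) :: nat \<Rightarrow> real) = (\<lambda>k. (1/2) * (- ivec kk k + ivec z k))"
  proof
    fix k
    have "I \<delta> k + I \<delta> k = - kk k + z k" using fun_cong[OF II, of k] by simp
    then have "real_of_int (I \<delta> k + I \<delta> k) = real_of_int (- kk k + z k)" by (simp only:)
    then have "real_of_int (I \<delta> k) + real_of_int (I \<delta> k) = - real_of_int (kk k) + real_of_int (z k)" by simp
    then show "(ivec (I \<delta>) k :: real) = (1/2) * (- ivec kk k + ivec z k)" unfolding ivec_def by (simp add: field_simps)
  qed
  also have "\<dots> = (\<lambda>k. - embK b (fv b (ivec \<delta>)) k + phi b (ivec \<delta>) k)"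
  proof -
    have "ivec d2 = (\<lambda>k. 2 * (ivec \<delta> k :: real))" unfolding d2_def ivec_def by simp
    then have ph: "phi b (ivec d2 :: nat \<Rightarrow> real) = (\<lambda>k. 2 * phi b (ivec \<delta>) k)" by (simp only: phi_scale)
    have "fv b (ivec d2 :: nat \<Rightarrow> real) = (\<lambda>j. 2 * fv b (ivec \<delta>) j)" using \<open>ivec d2 = _\<close> by (simp only: fv_scale)
    then have em: "embK b (fv b (ivec d2 :: nat \<Rightarrow> real)) = (\<lambda>k. 2 * embK b (fv b (ivec \<delta>)) k)" by (simp only: embK_scale)
    have zph: "(ivec z :: nat \<Rightarrow> real) = phi b (ivec d2)" using z(2) unfolding phi_def by simp
    show ?thesis unfolding zph emb2[symmetric] ph em by (simp add: fun_eq_iff)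
  qed
  finally show ?thesis .
qed

lemma reverse_dir:
  assumes Kd: "K = lat_span 4 b" and eps: "\<forall>w\<in>K. bK3 w v = \<epsilon> * bK3 w \<delta>" and e: "\<epsilon> \<noteq> 0"
  shows "hyp v \<inter> (C \<inter> cx_span K) = hyp \<delta> \<inter> (C \<inter> cx_span K)"
proof -
  have "bK3 \<omega> (ivec v) = of_int \<epsilon> * bK3 \<omega> (ivec \<delta>)" if omin: "\<omega> \<in> cx_span K" for \<omega>
  proof -
    obtain n :: nat and c w where om: "\<omega> = (\<lambda>k. \<Sum>i<n. c i * of_int (w i k))" "\<forall>i<n. w i \<in> K"
      using omin unfolding cx_span_gspan gspan_def by auto
    have bw: "bK3 \<omega> (ivec u) = (\<Sum>i<n. c i * of_int (bK3 (w i) u))" for u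
    proof -
      have "\<omega> = (\<lambda>k. \<Sum>i<n. c i * ivec (w i) k)" unfolding om ivec_def ..
      then show ?thesis by (simp add: bil_sum1 bil_scale1 bil_ivec)
    qed
    have "\<forall>i\<in>{..<n}. c i * of_int (bK3 (w i) v) = of_int \<epsilon> * (c i * of_int (bK3 (w i) \<delta>))"
      using om(2) eps by (auto simp: mult.left_commute)
    then have "(\<Sum>i<n. c i * of_int (bK3 (w i) v)) = (\<Sum>i<n. of_int \<epsilon> * (c i * of_int (bK3 (w i) \<delta>)))"
      by (intro sum.cong) auto
    then show ?thesis unfolding bw by (simp add: sum_distrib_left)
  qed
  then have iff: "\<omega> \<in> cx_span K \<Longrightarrow> (bK3 \<omega> (ivec v) = 0 \<longleftrightarrow> bK3 \<omega> (ivec \<delta>) = 0)" for \<omega>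
    using e by simp
  show ?thesis unfolding hyp_def using iff by blast
qed


lemma phi_lin: "phi b (\<lambda>k. x k + c * y k) = (\<lambda>k. phi b x k + c * phi b y k :: 'a::field_char_0)"
  unfolding phi_def fv_add fv_scale embK_add embK_scale by (simp add: fun_eq_iff algebra_simps)

lemma two_sq: fixes A B :: "nat \<Rightarrow> real" and \<epsilon> :: real
  shows "bK3 (\<lambda>k. A k + (-\<epsilon>) * B k) (\<lambda>k. A k + (-\<epsilon>) * B k) + bK3 (\<lambda>k. A k + \<epsilon> * B k) (\<lambda>k. A k + \<epsilon> * B k)
     = 2 * bK3 A A + 2 * \<epsilon>^2 * bK3 B B"
  using bK3_lin_norm[of 1 A "-\<epsilon>" B] bK3_lin_norm[of 1 A "\<epsilon>" B] by (simp add: power2_eq_square)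


lemma small_int1: "(x::int) \<ge> -2 \<Longrightarrow> x < 0 \<Longrightarrow> odd x \<or> 4 dvd x \<Longrightarrow> x = -1"
  by presburger
lemma small_int2: "(x::int) \<ge> -2 \<Longrightarrow> x \<le> 0 \<Longrightarrow> odd x \<or> 4 dvd x \<Longrightarrow> x = 0 \<or> x = -1"
  by presburger
lemma small_int3: "(x::int) + y = -4 \<Longrightarrow> 4 dvd x \<Longrightarrow> x \<le> 0 \<Longrightarrow> 4 dvd y \<Longrightarrow> y \<le> 0 \<Longrightarrow> x = 0 \<or> y = 0"
  by presburger

theorem proposition3p14:
  fixes Lam K :: "(nat \<Rightarrow> int) set"
    and I :: "(nat \<Rightarrow> int) \<Rightarrow> (nat \<Rightarrow> int)"
    and \<omega>0 :: "nat \<Rightarrow> complex"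
    and d \<delta> :: "nat \<Rightarrow> int"
  assumes Lam: "iso_to 12 gram_Lambda Lam" "primitive_in_K3 Lam"
    and K: "iso_to 4 gram_U2U2 K" "K \<subseteq> Lam"
    and E: "iso_to 8 gram_E8_2 (orth_in Lam K)"
    and patching_odd: "\<exists>d1 d2. d1 \<in> lat_dual K - ivec ` K
        \<and> d2 \<in> lat_dual (orth_in Lam K) - ivec ` (orth_in Lam K)
        \<and> ivec ` Lam = {(\<lambda>k. of_int n * (d1 k + d2 k) + of_int (x k) + of_int (y k)) | n x y.
                            x \<in> K \<and> y \<in> orth_in Lam K}
        \<and> (\<exists>m::int. bK3 d1 d1 = of_int (2 * m + 1))"
    and Imu: "isometry_K3 I"
      "{x \<in> zvec 22. I x = - x} = K"
      "{x \<in> zvec 22. I x = x} = {x \<in> zvec 22. \<forall>y\<in>K. bK3 x y = 0}"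
    and comp: "\<omega>0 \<in> period_cone Lam"
    and roots: "d \<in> Lam" "\<delta> \<in> Lam" "bK3 d d = -2" "bK3 \<delta> \<delta> = -2"
    and neg: "\<exists>\<delta>K \<delta>E. \<delta>K \<in> lat_dual K \<and> \<delta>E \<in> lat_dual (orth_in Lam K) \<and> ivec \<delta> = \<delta>K + \<delta>E \<and> bK3 \<delta>K \<delta>K < 0"
  shows "hyp d \<inter> (connected_component_set (period_cone Lam) \<omega>0 \<inter> cx_span K)
           = hyp \<delta> \<inter> (connected_component_set (period_cone Lam) \<omega>0 \<inter> cx_span K)
         \<longleftrightarrow> d \<in> {\<delta>, - \<delta>, I \<delta>, - I \<delta>}"
proof -
  obtain bL where bL: "\<forall>i<12. bL i \<in> zvec 22" "Lam = lat_span 12 bL"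
    using Lam(1) unfolding iso_to_def by auto
  obtain b where b: "Kbasis b" "K = lat_span 4 b"
    using K(1) unfolding iso_to_def Kbasis_def by auto
  obtain bE where bE: "Ebasis bE" "orth_in Lam K = lat_span 8 bE"
    using E unfolding iso_to_def Ebasis_def by auto
  have S: "Setup b bE bL K Lam" unfolding Setup_def using bL b bE K(2) by auto
  obtain d1 d2 m where pd: "d1 \<in> lat_dual K" "d2 \<in> lat_dual (orth_in Lam K)"
      "ivec ` Lam = {(\<lambda>k. of_int n * (d1 k + d2 k) + of_int (x k) + of_int (y k)) | n x y. x \<in> K \<and> y \<in> orth_in Lam K}"
      "bK3 d1 d1 = of_int (2 * m + 1)"
    using patching_odd by blast
  have par: "odd (qf (fv b v)) \<or> 4 dvd qf (fv b v)" if "v \<in> Lam" for v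
    by (rule parity_Lam[OF S pd that])
  obtain \<delta>K \<delta>E where nd: "\<delta>K \<in> lat_dual K" "\<delta>E \<in> lat_dual (orth_in Lam K)" "ivec \<delta> = \<delta>K + \<delta>E" "bK3 \<delta>K \<delta>K < 0"
    using neg by blast
  have qdneg: "qf (fv b \<delta>) < 0" by (rule neg_qf[OF S nd])
  define Pd where "Pd = phi b (ivec d :: nat \<Rightarrow> real)"
  define P\<delta> where "P\<delta> = phi b (ivec \<delta> :: nat \<Rightarrow> real)"
  have nd1: "-2 = real_of_int (qf (fv b d)) + bK3 Pd Pd" "bK3 Pd Pd \<le> 0"
    using norm_Lam[OF S roots(1)] roots(3) unfolding Pd_def by auto
  have n\<delta>1: "-2 = real_of_int (qf (fv b \<delta>)) + bK3 P\<delta> P\<delta>" "bK3 P\<delta> P\<delta> \<le> 0"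
    using norm_Lam[OF S roots(2)] roots(4) unfolding P\<delta>_def by auto
  have qd1: "qf (fv b \<delta>) = -1"
  proof -
    have "qf (fv b \<delta>) \<ge> -2" using n\<delta>1 by linarith
    then show ?thesis using qdneg par[OF roots(2)] small_int1 by blast
  qed
  have P\<delta>n: "bK3 P\<delta> P\<delta> = -1" using n\<delta>1(1) qd1 by simp
  define a where "a = (fv b (ivec \<delta>) :: nat \<Rightarrow> real)"
  define e where "e = (fv b (ivec d) :: nat \<Rightarrow> real)"
  have aint: "a j = real_of_int (fv b \<delta> j)" for j unfolding a_def fv_ivec ..
  have eint: "e j = real_of_int (fv b d j)" for j unfolding e_def fv_ivec ..
  have qa: "qf a = -1" using qd1 unfolding qf_def aint by (simp flip: of_int_mult of_int_add)
  have qe: "qf e = real_of_int (qf (fv b d))" unfolding qf_def eint by simp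
  have \<delta>dec: "(ivec \<delta> :: nat \<Rightarrow> real) = (\<lambda>k. embK b a k + P\<delta> k)" unfolding P\<delta>_def phi_def a_def by simp
  have ddec: "(ivec d :: nat \<Rightarrow> real) = (\<lambda>k. embK b e k + Pd k)" unfolding Pd_def phi_def e_def by simp
  have Iv: "(ivec (I \<delta>) :: nat \<Rightarrow> real) = (\<lambda>k. - embK b a k + P\<delta> k)"
    using I_lemma[OF S Imu roots(2)] unfolding a_def P\<delta>_def .
  show ?thesis
  proof
    assume heq: "hyp d \<inter> (connected_component_set (period_cone Lam) \<omega>0 \<inter> cx_span K)
           = hyp \<delta> \<inter> (connected_component_set (period_cone Lam) \<omega>0 \<inter> cx_span K)"
    have hl: "\<forall>j<4. e j + Bf e a * a j = 0"
      using hyperplane[OF S comp qa[unfolded a_def] heq] unfolding a_def e_def .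
    define c where "c = Bf e a"
    have ej: "e j = - c * a j" if "j < 4" for j using hl that unfolding c_def by (simp add: add_eq_0_iff2)
    have "qf e = c^2 * qf a" unfolding qf_def using ej[of 0] ej[of 1] ej[of 2] ej[of 3]
      by (simp add: power2_eq_square algebra_simps)
    then have qec: "real_of_int (qf (fv b d)) = - (c^2)" using qa qe by simp
    have qdge: "qf (fv b d) \<ge> -2" using nd1 by linarith
    have qdle: "qf (fv b d) \<le> 0"
    proof -
      have "real_of_int (qf (fv b d)) \<le> 0" using qec by simp
      then show ?thesis by simp
    qed
    have qcases: "qf (fv b d) = 0 \<or> qf (fv b d) = -1" using qdge qdle par[OF roots(1)] small_int2 by blast
    have Ld: "Lam = lat_span 12 bL" and KL: "K \<subseteq> Lam" using bL K(2) by auto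
    show "d \<in> {\<delta>, - \<delta>, I \<delta>, - I \<delta>}"
    proof (cases "qf (fv b d) = 0")
      case True
      then have "c^2 = 0" using qec by simp
      then have c0: "c = 0" by simp
      have fz: "fv b d j = 0" if "j < 4" for j using ej[OF that] c0 eint[of j] by simp
      obtain z where z: "z \<in> orth_in Lam K" "(\<lambda>k. ivec d k - embK b (fv b (ivec d)) k) = (ivec z :: nat \<Rightarrow> real)"
        using Lam_split[OF b Ld KL bL(1) roots(1)] fz by auto
      have "real_of_int (bK3 z z) = bK3 (ivec z) (ivec z :: nat \<Rightarrow> real)" by (simp add: bil_ivec)
      also have "\<dots> = bK3 Pd Pd" unfolding z(2)[symmetric] Pd_def phi_def ..
      also have "\<dots> = -2" using nd1(1) True by simp
      finally have "bK3 z z = -2" by simp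
      moreover have "4 dvd bK3 z z" using E_int_props(1)[OF bE(1)] z(1) bE(2) by simp
      ultimately show ?thesis by simp
    next
      case False
      then have q1: "qf (fv b d) = -1" using qcases by simp
      then have "c^2 = 1" using qec by simp
      then have "c = 1 \<or> c = -1" by (simp add: power2_eq_1_iff)
      then obtain \<epsilon> :: int where eps: "\<epsilon> = 1 \<or> \<epsilon> = -1" "real_of_int \<epsilon> = - c" by (metis of_int_1 of_int_minus minus_minus)
      have eps2: "real_of_int \<epsilon> ^ 2 = 1" "\<epsilon> * \<epsilon> = 1" using eps(1) by auto
      have fde: "fv b d j = \<epsilon> * fv b \<delta> j" if "j < 4" for j
      proof -
        have "real_of_int (fv b d j) = real_of_int (\<epsilon> * fv b \<delta> j)" using ej[OF that] eint[of j] aint[of j] eps(2) by simp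
        then show ?thesis by (simp only: of_int_eq_iff)
      qed
      have Pdn: "bK3 Pd Pd = -1" using nd1(1) q1 by simp
      define u1 where "u1 = (\<lambda>k. d k + (- \<epsilon>) * \<delta> k)"
      define u2 where "u2 = (\<lambda>k. d k + \<epsilon> * \<delta> k)"
      have u1L: "u1 \<in> Lam" unfolding u1_def Ld
        by (rule latspan_add[OF _ latspan_scale]) (use roots(1,2) Ld in auto)
      have u2L: "u2 \<in> Lam" unfolding u2_def Ld using latspan_add[OF _ latspan_scale] roots(1,2) Ld by auto
      have u1e: "\<forall>j<4. even (fv b u1 j)" unfolding u1_def fv_add fv_scale using fde by simp
      have u2e: "\<forall>j<4. even (fv b u2 j)" unfolding u2_def fv_add fv_scale using fde by simp
      obtain z1 where z1: "z1 \<in> orth_in Lam K" "(\<lambda>k. ivec u1 k - embK b (fv b (ivec u1)) k) = (ivec z1 :: nat \<Rightarrow> real)"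
        using Lam_split[OF b Ld KL bL(1) u1L u1e] by auto
      obtain z2 where z2: "z2 \<in> orth_in Lam K" "(\<lambda>k. ivec u2 k - embK b (fv b (ivec u2)) k) = (ivec z2 :: nat \<Rightarrow> real)"
        using Lam_split[OF b Ld KL bL(1) u2L u2e] by auto
      have iu1: "(ivec u1 :: nat \<Rightarrow> real) = (\<lambda>k. ivec d k + (- real_of_int \<epsilon>) * ivec \<delta> k)" unfolding u1_def ivec_def by simp
      have iu2: "(ivec u2 :: nat \<Rightarrow> real) = (\<lambda>k. ivec d k + real_of_int \<epsilon> * ivec \<delta> k)" unfolding u2_def ivec_def by simp
      have pz1: "(ivec z1 :: nat \<Rightarrow> real) = (\<lambda>k. Pd k + (- real_of_int \<epsilon>) * P\<delta> k)"
        unfolding z1(2)[symmetric] iu1[symmetric] using phi_lin[of b "ivec d" "- real_of_int \<epsilon>" "ivec \<delta>"]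
        unfolding iu1[symmetric] Pd_def P\<delta>_def phi_def by simp
      have pz2: "(ivec z2 :: nat \<Rightarrow> real) = (\<lambda>k. Pd k + real_of_int \<epsilon> * P\<delta> k)"
        unfolding z2(2)[symmetric] iu2[symmetric] using phi_lin[of b "ivec d" "real_of_int \<epsilon>" "ivec \<delta>"]
        unfolding iu2[symmetric] Pd_def P\<delta>_def phi_def by simp
      have "real_of_int (bK3 z1 z1 + bK3 z2 z2) = bK3 (ivec z1) (ivec z1 :: nat \<Rightarrow> real) + bK3 (ivec z2) (ivec z2 :: nat \<Rightarrow> real)"
        by (simp add: bil_ivec)
      also have "\<dots> = 2 * bK3 Pd Pd + 2 * (real_of_int \<epsilon>)^2 * bK3 P\<delta> P\<delta>" unfolding pz1 pz2 by (rule two_sq)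
      also have "\<dots> = -4" using Pdn P\<delta>n eps2 by simp
      finally have sum4: "bK3 z1 z1 + bK3 z2 z2 = -4" by linarith
      have z1p: "4 dvd bK3 z1 z1" "bK3 z1 z1 \<le> 0" using E_int_props(1,2)[OF bE(1)] z1(1) bE(2) by auto
      have z2p: "4 dvd bK3 z2 z2" "bK3 z2 z2 \<le> 0" using E_int_props(1,2)[OF bE(1)] z2(1) bE(2) by auto
      have "bK3 z1 z1 = 0 \<or> bK3 z2 z2 = 0" using sum4 z1p z2p small_int3 by blast
      then have zz: "z1 = (\<lambda>k. 0) \<or> z2 = (\<lambda>k. 0)" using E_int_props(3)[OF bE(1)] z1(1) z2(1) bE(2) by auto
      have embe: "embK b e = (\<lambda>k. real_of_int \<epsilon> * embK b a k)"
      proof -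
        have "embK b e = embK b (\<lambda>j. real_of_int \<epsilon> * a j)"
          by (rule embK_cong) (simp add: eint aint fde)
        then show ?thesis by (simp add: embK_scale)
      qed
      from zz show ?thesis
      proof
        assume "z1 = (\<lambda>k. 0)"
        then have "Pd k = real_of_int \<epsilon> * P\<delta> k" for k using fun_cong[OF pz1, of k] by (simp add: ivec_def)
        then have "(ivec d :: nat \<Rightarrow> real) = (\<lambda>k. real_of_int \<epsilon> * ivec \<delta> k)"
          unfolding ddec embe \<delta>dec by (simp add: fun_eq_iff algebra_simps)
        then have "d k = \<epsilon> * \<delta> k" for k unfolding ivec_def fun_eq_iff
          by (metis of_int_eq_iff of_int_mult)
        then show ?thesis using eps(1) by (auto simp: fun_eq_iff)
      next
        assume "z2 = (\<lambda>k. 0)"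
        then have "Pd k = - real_of_int \<epsilon> * P\<delta> k" for k using fun_cong[OF pz2, of k] by (simp add: ivec_def)
        then have "(ivec d :: nat \<Rightarrow> real) = (\<lambda>k. (- real_of_int \<epsilon>) * ivec (I \<delta>) k)"
          unfolding ddec embe Iv by (simp add: fun_eq_iff algebra_simps)
        then have "d k = (- \<epsilon>) * I \<delta> k" for k unfolding ivec_def fun_eq_iff
          by (metis of_int_eq_iff of_int_mult of_int_minus)
        then show ?thesis using eps(1) by (auto simp: fun_eq_iff)
      qed
    qed
  next
    assume dd: "d \<in> {\<delta>, - \<delta>, I \<delta>, - I \<delta>}"
    have Kd: "K = lat_span 4 b" using b by simp
    have Kz: "w \<in> zvec 22" if "w \<in> K" for w using latspan_zvec[of 4 b 22 w] b that unfolding Kbasis_def by auto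
    have \<delta>z: "\<delta> \<in> zvec 22" using latspan_zvec[of 12 bL 22 \<delta>] bL roots(2) by auto
    have Iiso: "bK3 (I x) (I y) = bK3 x y" if "x \<in> zvec 22" "y \<in> zvec 22" for x y
      using Imu(1) that unfolding isometry_K3_def by blast
    have IK: "I w = - w" if "w \<in> K" for w using Imu(2) that by blast
    have negI: "bK3 w (I \<delta>) = - bK3 w \<delta>" if "w \<in> K" for w
    proof -
      have "bK3 w \<delta> = bK3 (I w) (I \<delta>)" using Iiso[OF Kz[OF that] \<delta>z] by simp
      also have "\<dots> = bK3 (\<lambda>k. - w k) (I \<delta>)" using IK[OF that] by (simp add: fun_Compl_def)
      also have "\<dots> = - bK3 w (I \<delta>)" by (rule bil_neg1)
      finally show ?thesis by simp
    qed
    have mneg: "bK3 w (- v) = - bK3 w v" for w v :: "nat \<Rightarrow> int"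
      using bil_neg2[of 22 gram_K3 w v] by (simp add: fun_Compl_def)
    have "\<exists>\<epsilon>::int. \<epsilon> \<noteq> 0 \<and> (\<forall>w\<in>K. bK3 w d = \<epsilon> * bK3 w \<delta>)"
    proof -
      consider "d = \<delta>" | "d = - \<delta>" | "d = I \<delta>" | "d = - I \<delta>" using dd by blast
      then show ?thesis
      proof cases
        case 1 then show ?thesis by (intro exI[of _ 1]) simp
      next
        case 2 then show ?thesis using mneg by (intro exI[of _ "-1"]) simp
      next
        case 3 then show ?thesis using negI by (intro exI[of _ "-1"]) simp
      next
        case 4 then show ?thesis using negI mneg by (intro exI[of _ 1]) simp
      qed
    qed
    then obtain \<epsilon> :: int where "\<epsilon> \<noteq> 0" "\<forall>w\<in>K. bK3 w d = \<epsilon> * bK3 w \<delta>" by blast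
    then show "hyp d \<inter> (connected_component_set (period_cone Lam) \<omega>0 \<inter> cx_span K)
           = hyp \<delta> \<inter> (connected_component_set (period_cone Lam) \<omega>0 \<inter> cx_span K)"
      using reverse_dir[OF Kd] by blast
  qed
qed


end
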